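(* Let $0 \le r \le n/2$ be an integer, let $B = B(n,r) = \bigcup_{i=0}^r S(n,i)$ be the Hamming ball of radius $r$ around $0$ in $\{0,1\}^n$, and let $A$ be the adjacency matrix of the subgraph of the Hamming cube induced by $B$ (two vertices adjacent iff their Hamming distance is $1$). For $0 \le t \le r$ let $\Lambda_t = \{2x - (n-2t) : x \in \mathcal{R}(n-2t, r-t+1)\}$. Then: (1) For each $t = 0,\dots,r$ and each of the $r-t+1$ distinct real numbers $\lambda \in \Lambda_t$, the matrix $A$ has an eigenspace $W_t(\lambda)$ (a subspace of eigenvectors of $A$ with eigenvalue $\lambda$) of dimension $\binom{n}{t} - \binom{n}{t-1}$. (2) A real number $\lambda$ is an eigenvalue of $A$ if and only if $\lambda \in \bigcup_{t=0}^r \Lambda_t$, and its multiplicity as an eigenvalue of $A$ is $m(\lambda) = \sum_{t : \lambda \in \Lambda_t} \left(\binom{n}{t} - \binom{n}{t-1}\right)$, where $\binom{n}{-1} := 0$. (3) Let $f \in W_t(\lambda)$. Then $f$ vanishes on $B(n,t-1) = \bigcup_{i=0}^{t-1} S(n,i)$, and for each $t \le i \le r$ the restriction of $f$ to $S(n,i)$ lies in the $t$-th eigenspace $V_t$ of $S(n,i)$. The restrictions of functions in $W_t(\lambda)$ to $S(n,t)$ span the $t$-th eigenspace $V_t$ of $S(n,t)$, and a function $f \in W_t(\lambda)$ is determined by its restriction to $S(n,t)$.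
   Context: $\{0,1\}^n$ is the Hamming cube with Hamming distance $|x-y|=|\{k: x_k\ne y_k\}|$ and weight $|x|$; points are identified with subsets of $\{1,\dots,n\}$. $S(n,i) = \{x : |x| = i\}$, with inner product $\langle f,g\rangle=\sum_{x\in S(n,i)}f(x)g(x)$ on functions. For $|z|\le i$, $g_z$ is the function on $S(n,i)$ equal to $1$ at $x$ if $z\subseteq x$ and $0$ otherwise; $U_j=\mathrm{span}\{g_z:|z|\le j\}$; the eigenspaces of $S(n,i)$ are $V_0=U_0$ (constants) and $V_j=U_j\cap U_{j-1}^\perp$, $1\le j\le i$. The Krawtchouk polynomial on $\{0,1\}^m$ of degree $k$ is $K^{(m)}_k(x) = \sum_{\ell=0}^k (-1)^\ell \binom{x}{\ell}\binom{m-x}{k-\ell}$ (a polynomial in $x$); its roots are real, distinct and lie in $(0,m)$, and $\mathcal{R}(m,k)$ denotes the set of roots of $K^{(m)}_k$. *)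

theory Defs
  imports "HOL-Analysis.Analysis" "HOL-Library.Function_Algebras"
begin

definition fscale :: "real \<Rightarrow> ('a \<Rightarrow> real) \<Rightarrow> ('a \<Rightarrow> real)" where
  "fscale c f = (\<lambda>x. c * f x)"

interpretation fvs: vector_space "fscale :: real \<Rightarrow> ('a \<Rightarrow> real) \<Rightarrow> ('a \<Rightarrow> real)"
  by unfold_locales (auto simp: fscale_def fun_eq_iff algebra_simps)

section \<open>The Hamming cube (points = subsets of {1..n})\<close>

definition sphere_layer :: "nat \<Rightarrow> nat \<Rightarrow> nat set set" where
  "sphere_layer n i = {x. x \<subseteq> {1..n} \<and> card x = i}"

definition hball :: "nat \<Rightarrow> nat \<Rightarrow> nat set set" where
  "hball n r = (\<Union>i\<in>{0..r}. sphere_layer n i)"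

definition hdist :: "nat set \<Rightarrow> nat set \<Rightarrow> nat" where
  "hdist x y = card ((x - y) \<union> (y - x))"

definition funs_on :: "nat set set \<Rightarrow> (nat set \<Rightarrow> real) set" where
  "funs_on X = {f. \<forall>x. x \<notin> X \<longrightarrow> f x = 0}"

definition restr :: "nat set set \<Rightarrow> (nat set \<Rightarrow> real) \<Rightarrow> (nat set \<Rightarrow> real)" where
  "restr X f = (\<lambda>x. if x \<in> X then f x else 0)"

definition adj_op :: "nat \<Rightarrow> nat \<Rightarrow> (nat set \<Rightarrow> real) \<Rightarrow> (nat set \<Rightarrow> real)" where
  "adj_op n r f = (\<lambda>x. if x \<in> hball n r
      then (\<Sum>y\<in>{y\<in>hball n r. hdist x y = 1}. f y) else 0)"

definition adj_eigenspace :: "nat \<Rightarrow> nat \<Rightarrow> real \<Rightarrow> (nat set \<Rightarrow> real) set" where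
  "adj_eigenspace n r mu = {f \<in> funs_on (hball n r). adj_op n r f = fscale mu f}"

definition is_adj_eigenvalue :: "nat \<Rightarrow> nat \<Rightarrow> real \<Rightarrow> bool" where
  "is_adj_eigenvalue n r mu \<longleftrightarrow> (\<exists>f \<in> adj_eigenspace n r mu. f \<noteq> 0)"

section \<open>Eigenspaces V_j of the Johnson scheme S(n,i)\<close>

definition gz :: "nat \<Rightarrow> nat \<Rightarrow> nat set \<Rightarrow> (nat set \<Rightarrow> real)" where
  "gz n i z = (\<lambda>x. if x \<in> sphere_layer n i \<and> z \<subseteq> x then 1 else 0)"

definition U_sp :: "nat \<Rightarrow> nat \<Rightarrow> nat \<Rightarrow> (nat set \<Rightarrow> real) set" where
  "U_sp n i j = fvs.span {gz n i z | z. z \<subseteq> {1..n} \<and> card z \<le> j}"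

definition layer_inner :: "nat \<Rightarrow> nat \<Rightarrow> (nat set \<Rightarrow> real) \<Rightarrow> (nat set \<Rightarrow> real) \<Rightarrow> real" where
  "layer_inner n i f g = (\<Sum>x\<in>sphere_layer n i. f x * g x)"

definition V_sp :: "nat \<Rightarrow> nat \<Rightarrow> nat \<Rightarrow> (nat set \<Rightarrow> real) set" where
  "V_sp n i j = (if j = 0 then U_sp n i 0
     else {f \<in> U_sp n i j. \<forall>g \<in> U_sp n i (j - 1). layer_inner n i f g = 0})"

definition krawtchouk :: "nat \<Rightarrow> nat \<Rightarrow> real \<Rightarrow> real" where
  "krawtchouk m k x = (\<Sum>l=0..k. (-1)^l * (x gchoose l) * ((real m - x) gchoose (k - l)))"

definition kraw_roots :: "nat \<Rightarrow> nat \<Rightarrow> real set" where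
  "kraw_roots m k = {x. krawtchouk m k x = 0}"

definition Lambda :: "nat \<Rightarrow> nat \<Rightarrow> nat \<Rightarrow> real set" where
  "Lambda n r t = {2 * x - (real n - 2 * real t) | x. x \<in> kraw_roots (n - 2 * t) (r - t + 1)}"

definition bdiff :: "nat \<Rightarrow> nat \<Rightarrow> int" where
  "bdiff n t = int (n choose t) - (if t = 0 then 0 else int (n choose (t - 1)))"

end

theory Submission
  imports Defs
begin



fun Qp :: "real \<Rightarrow> nat \<Rightarrow> real poly" where
  "Qp N 0 = 1"
| "Qp N (Suc 0) = [:0,1:]"
| "Qp N (Suc (Suc k)) = [:0,1:] * Qp N (Suc k) - smult (real (Suc k) * (N - real k)) (Qp N k)"

lemma Qp_rec: "poly (Qp N (Suc k)) x = x * poly (Qp N k) x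
   - (if k = 0 then 0 else real k * (N - real k + 1) * poly (Qp N (k - 1)) x)"
  by (cases k) (auto simp: algebra_simps)

lemma Qp_parity: "poly (Qp N k) (- x) = (-1)^k * poly (Qp N k) x"
  by (induction N k rule: Qp.induct) (auto simp: algebra_simps)

lemma Qp_deg_coeff: "degree (Qp N k) \<le> k \<and> coeff (Qp N k) k = 1"
proof (induction N k rule: Qp.induct)
  case (3 N k)
  have d1: "degree ([:0,1:] * Qp N (Suc k)) \<le> Suc (Suc k)"
  proof -
    have "degree ([:0,1:] * Qp N (Suc k)) \<le> degree [:0::real,1:] + degree (Qp N (Suc k))"
      by (rule degree_mult_le)
    also have "\<dots> \<le> 1 + Suc k" using 3 by simp
    finally show ?thesis by simp
  qed
  have d2: "degree (smult (real (Suc k) * (N - real k)) (Qp N k)) \<le> Suc (Suc k)"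
    using 3 degree_smult_le[of "real (Suc k) * (N - real k)" "Qp N k"] by linarith
  have "degree (Qp N (Suc (Suc k))) \<le> Suc (Suc k)"
    using d1 d2 by (simp add: degree_diff_le)
  moreover have "coeff (Qp N (Suc (Suc k))) (Suc (Suc k)) = 1"
  proof -
    have "coeff (Qp N k) (Suc (Suc k)) = 0" using 3 by (simp add: coeff_eq_0)
    then show ?thesis using 3 by (simp add: mult_pCons_left)
  qed
  ultimately show ?case by blast
qed auto

lemma Qp_degree: "degree (Qp N k) = k"
  using Qp_deg_coeff[of N k] by (metis le_antisym le_degree one_neq_zero)

lemma Qp_lead: "lead_coeff (Qp N k) = 1"
  using Qp_deg_coeff[of N k] Qp_degree[of N k] by simp

lemma Qp_nonzero: "Qp N k \<noteq> 0"
  using Qp_lead[of N k] by auto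

lemma poly_samesign:
  fixes p :: "real poly"
  assumes "a \<le> b" "\<And>x. a \<le> x \<Longrightarrow> x \<le> b \<Longrightarrow> poly p x \<noteq> 0"
  shows "poly p a * poly p b > 0"
proof (rule ccontr)
  assume neg: "\<not> ?thesis"
  have na: "poly p a \<noteq> 0" and nb: "poly p b \<noteq> 0" using assms by auto
  have "a \<noteq> b"
  proof
    assume "a = b"
    hence "poly p a * poly p b > 0" using na by (metis mult_neg_neg mult_pos_pos linorder_neq_iff)
    thus False using neg by simp
  qed
  hence "a < b" using assms(1) by simp
  have "poly p a * poly p b \<noteq> 0" using na nb by simp
  hence "poly p a * poly p b < 0" using neg by linarith
  then obtain x where "x > a" "x < b" "poly p x = 0" using poly_IVT[OF \<open>a < b\<close>] by blast
  thus False using assms(2)[of x] by simp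
qed

lemma sign_transfer:
  fixes p :: "real poly" and s :: real
  assumes "s * poly p y > 0" "s = 1 \<or> s = -1"
    "\<And>x. min y z \<le> x \<Longrightarrow> x \<le> max y z \<Longrightarrow> poly p x \<noteq> 0"
  shows "s * poly p z > 0"
proof -
  have "poly p (min y z) * poly p (max y z) > 0"
    by (rule poly_samesign) (use assms(3) in auto)
  hence "poly p y * poly p z > 0" by (cases "y \<le> z") (auto simp: min_def max_def mult.commute)
  thus ?thesis using assms(1,2) by (auto simp: zero_less_mult_iff)
qed

lemma mono_chain:
  fixes f :: "nat \<Rightarrow> real"
  assumes "\<And>j. j < m \<Longrightarrow> f j < f (Suc j)"
  shows "i < i' \<Longrightarrow> i' \<le> m \<Longrightarrow> f i < f i'"
proof (induction i')
  case (Suc i')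
  show ?case
  proof (cases "i = i'")
    case True thus ?thesis using assms Suc by simp
  next
    case False thus ?thesis using assms[of i'] Suc by simp
  qed
qed simp

definition IL :: "real \<Rightarrow> nat \<Rightarrow> bool" where
 "IL N k \<longleftrightarrow> (\<exists>xs::nat\<Rightarrow>real.
    (\<forall>i i'. i < i' \<and> i' < k \<longrightarrow> xs i < xs i') \<and>
    (\<forall>j<k. poly (Qp N k) (xs j) = 0) \<and>
    (\<forall>j<k. (-1)^(k-1-j) * poly (Qp N (k-1)) (xs j) > 0) \<and>
    (\<forall>j\<le>k. \<forall>y. (j = 0 \<or> xs (j-1) < y) \<and> (j = k \<or> y < xs j) \<longrightarrow> (-1)^(k-j) * poly (Qp N k) y > 0))"

lemma IL_1: "IL N 1"
  unfolding IL_def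
proof (intro exI[of _ "\<lambda>_. 0"] conjI allI impI)
  fix j :: nat and y :: real assume "j \<le> 1" "(j = 0 \<or> (0::real) < y) \<and> (j = 1 \<or> y < 0)"
  then show "0 < (- 1) ^ (1 - j) * poly (Qp N 1) y"
    by (cases j) (auto simp: numeral_eq_Suc)
qed (auto simp: numeral_eq_Suc)

lemma neg1_pow_cases: "((-1::real)^e = 1) \<or> ((-1::real)^e = -1)"
  by (cases "even e") auto

lemma IL_step:
  assumes IL: "IL N k" and k: "k \<ge> 1" and b: "real k * (N - real k + 1) > 0"
  shows "IL N (Suc k)"
proof -
  obtain xs where H: "(\<forall>i i'. i < i' \<and> i' < k \<longrightarrow> xs i < xs i') \<and>
    (\<forall>j<k. poly (Qp N k) (xs j) = 0) \<and>
    (\<forall>j<k. (-1)^(k-1-j) * poly (Qp N (k-1)) (xs j) > 0) \<and>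
    (\<forall>j\<le>k. \<forall>y. (j = 0 \<or> xs (j-1) < y) \<and> (j = k \<or> y < xs j) \<longrightarrow> (-1)^(k-j) * poly (Qp N k) y > 0)"
    using IL unfolding IL_def by (elim exE)
  have mono: "\<And>i i'. i < i' \<Longrightarrow> i' < k \<Longrightarrow> xs i < xs i'" using H by simp
  have rt: "\<And>j. j<k \<Longrightarrow> poly (Qp N k) (xs j) = 0" using H by simp
  have sg: "\<And>j. j<k \<Longrightarrow> (-1)^(k-1-j) * poly (Qp N (k-1)) (xs j) > 0" using H by simp
  have iv: "\<And>j y. j\<le>k \<Longrightarrow> (j = 0 \<or> xs (j-1) < y) \<Longrightarrow> (j = k \<or> y < xs j) \<Longrightarrow> (-1)^(k-j) * poly (Qp N k) y > 0"
    using H by simp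
  define bb where "bb = real k * (N - real k + 1)"
  let ?Q = "Qp N (Suc k)"
  have bpos: "bb > 0" using b by (simp add: bb_def)
  have Vx: "(-1)^(Suc k - Suc j) * poly ?Q (xs j) > 0" if "j < k" for j
  proof -
    have q0: "poly ?Q (xs j) = xs j * poly (Qp N k) (xs j) - bb * poly (Qp N (k-1)) (xs j)"
      using Qp_rec[of N k "xs j"] k unfolding bb_def by simp
    have q: "poly ?Q (xs j) = - bb * poly (Qp N (k-1)) (xs j)"
      using q0 rt[OF that] by simp
    have e: "Suc k - Suc j = Suc (k - 1 - j)" using that by simp
    have "(-1::real)^(Suc k - Suc j) * poly ?Q (xs j) = bb * ((-1)^(k-1-j) * poly (Qp N (k-1)) (xs j))"
      unfolding e q by simp
    thus ?thesis using mult_pos_pos[OF bpos sg[OF that]] by simp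
  qed
  obtain M1 where M1: "\<And>x. x \<ge> M1 \<Longrightarrow> poly ?Q x \<ge> 1"
    using poly_pinfty_gt_lc[of ?Q] Qp_lead[of N "Suc k"] by auto
  define Mp where "Mp = max M1 (xs (k-1) + 1)"
  define Mm where "Mm = - max M1 (- xs 0 + 1)"
  have Mp: "poly ?Q Mp > 0" using M1[of Mp] by (simp add: Mp_def)
  have Mm: "(-1)^(Suc k) * poly ?Q Mm > 0"
  proof -
    have "poly ?Q (- Mm) \<ge> 1" using M1[of "-Mm"] by (simp add: Mm_def)
    moreover have "poly ?Q (- Mm) = (-1)^(Suc k) * poly ?Q Mm" by (rule Qp_parity)
    ultimately show ?thesis by simp
  qed
  define p where "p j = (if j = 0 then Mm else if j \<le> k then xs (j-1) else Mp)" for j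
  have P1: "(-1)^(Suc k - j) * poly ?Q (p j) > 0" if "j \<le> Suc k" for j
  proof -
    have "j = 0 \<or> (1 \<le> j \<and> j \<le> k) \<or> j = Suc k" using that by linarith
    then consider "j = 0" | "1 \<le> j \<and> j \<le> k" | "j = Suc k" by blast
    then show ?thesis
    proof cases
      case 1 thus ?thesis using Mm by (simp add: p_def)
    next
      case 2
      hence "j - 1 < k" by linarith
      hence "(-1)^(Suc k - Suc (j-1)) * poly ?Q (xs (j-1)) > 0" using Vx[of "j-1"] by blast
      thus ?thesis using 2 by (simp add: p_def)
    next
      case 3 thus ?thesis using Mp by (simp add: p_def)
    qed
  qed
  have P2: "p j < p (Suc j)" if "j \<le> k" for j
  proof -
    have "j = 0 \<or> (1 \<le> j \<and> j < k) \<or> (j = k \<and> j \<ge> 1)" using that k by linarith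
    then consider "j = 0" | "1 \<le> j \<and> j < k" | "j = k \<and> j \<ge> 1" by blast
    then show ?thesis
    proof cases
      case 1 thus ?thesis using k by (simp add: p_def Mm_def)
    next
      case 2 thus ?thesis using mono[of "j-1" j] by (simp add: p_def)
    next
      case 3 thus ?thesis by (simp add: p_def Mp_def)
    qed
  qed
  have pmono: "p i < p i'" if "i < i'" "i' \<le> Suc k" for i i'
    using mono_chain[of "Suc k" p, OF _ that] P2 by simp
  have "\<exists>y. p j < y \<and> y < p (Suc j) \<and> poly ?Q y = 0" if jk: "j \<le> k" for j
  proof -
    have s1: "(-1)^(Suc k - j) * poly ?Q (p j) > 0" using P1 jk by simp
    have s2: "(-1)^(Suc k - Suc j) * poly ?Q (p (Suc j)) > 0" using P1[of "Suc j"] jk by simp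
    have e: "(-1::real)^(Suc k - j) = - ((-1)^(Suc k - Suc j))"
      using jk by (simp add: Suc_diff_le)
    have "poly ?Q (p j) * poly ?Q (p (Suc j)) < 0"
    proof (cases "(-1::real)^(Suc k - Suc j) = 1")
      case True
      hence "poly ?Q (p j) < 0" "poly ?Q (p (Suc j)) > 0" using s1 s2 e by auto
      thus ?thesis by (simp add: mult_less_0_iff)
    next
      case False
      hence m: "(-1::real)^(Suc k - Suc j) = -1" using neg1_pow_cases by blast
      hence "poly ?Q (p j) > 0" "poly ?Q (p (Suc j)) < 0" using s1 s2 e by auto
      thus ?thesis by (simp add: mult_less_0_iff)
    qed
    then obtain y where "y > p j" "y < p (Suc j)" "poly ?Q y = 0" using poly_IVT[OF P2[OF jk]] by blast
    thus ?thesis by blast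
  qed
  hence "\<forall>j. \<exists>y. j \<le> k \<longrightarrow> p j < y \<and> y < p (Suc j) \<and> poly ?Q y = 0" by blast
  then obtain ys where ys0: "\<forall>j. j \<le> k \<longrightarrow> p j < ys j \<and> ys j < p (Suc j) \<and> poly ?Q (ys j) = 0"
    by (rule choice[THEN exE])
  hence ys: "\<And>j. j \<le> k \<Longrightarrow> p j < ys j \<and> ys j < p (Suc j) \<and> poly ?Q (ys j) = 0" by blast
  have ymono: "ys i < ys i'" if "i < i'" "i' \<le> k" for i i'
  proof -
    have "ys i < p (Suc i)" using ys[of i] that by simp
    also have "p (Suc i) \<le> p i'" using pmono[of "Suc i" i'] that by (cases "Suc i = i'") auto
    also have "p i' < ys i'" using ys[of i'] that by simp
    finally show ?thesis .
  qed
  have ylt: "i < i'" if "ys i < ys i'" "i \<le> k" "i' \<le> k" for i i'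
    using ymono[of i' i] that by (cases i i' rule: linorder_cases) auto
  have roots: "{x. poly ?Q x = 0} = ys ` {..k}"
  proof -
    have sub: "ys ` {..k} \<subseteq> {x. poly ?Q x = 0}" using ys by auto
    have inj: "inj_on ys {..k}"
    proof (rule inj_onI)
      fix a b assume "a \<in> {..k}" "b \<in> {..k}" "ys a = ys b"
      thus "a = b" using ymono[of a b] ymono[of b a] by (cases a b rule: linorder_cases) auto
    qed
    have c1: "card (ys ` {..k}) = Suc k" using card_image[OF inj] by simp
    have c2: "card {x. poly ?Q x = 0} \<le> Suc k"
      using card_poly_roots_bound[OF Qp_nonzero[of N "Suc k"]] Qp_degree[of N "Suc k"] by simp
    have fin: "finite {x. poly ?Q x = 0}" by (rule poly_roots_finite[OF Qp_nonzero])
    have "card (ys ` {..k}) = card {x. poly ?Q x = 0}" using card_mono[OF fin sub] c1 c2 by simp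
    thus ?thesis using card_subset_eq[OF fin sub] by simp
  qed
  show ?thesis
    unfolding IL_def
  proof (intro exI[of _ ys] conjI allI impI)
    fix i i' assume "i < i' \<and> i' < Suc k" thus "ys i < ys i'" using ymono by simp
  next
    fix j assume "j < Suc k" thus "poly ?Q (ys j) = 0" using ys by simp
  next
    fix j assume j: "j < Suc k"
    have "(-1)^(k-j) * poly (Qp N k) (ys j) > 0"
    proof (rule iv)
      show "j \<le> k" using j by simp
      show "j = 0 \<or> xs (j - 1) < ys j"
        using ys[of j] j by (cases "j = 0") (auto simp: p_def)
      show "j = k \<or> ys j < xs j"
        using ys[of j] j by (cases "j = k") (auto simp: p_def)
    qed
    thus "(-1)^(Suc k - 1 - j) * poly (Qp N (Suc k - 1)) (ys j) > 0" by simp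
  next
    fix j y assume j: "j \<le> Suc k" and yi: "(j = 0 \<or> ys (j - 1) < y) \<and> (j = Suc k \<or> y < ys j)"
    have pin: "(j = 0 \<or> ys (j - 1) < p j) \<and> (j = Suc k \<or> p j < ys j)"
    proof
      show "j = 0 \<or> ys (j - 1) < p j" using ys[of "j-1"] j by (cases j) auto
      show "j = Suc k \<or> p j < ys j" using ys[of j] j by (cases "j = Suc k") auto
    qed
    show "(-1)^(Suc k - j) * poly ?Q y > 0"
    proof (rule sign_transfer[of _ _ "p j"])
      show "(-1)^(Suc k - j) * poly ?Q (p j) > 0" using P1 j by simp
      show "(-1::real)^(Suc k - j) = 1 \<or> (-1::real)^(Suc k - j) = -1" by (rule neg1_pow_cases)
      fix x assume x1: "min (p j) y \<le> x" and x2: "x \<le> max (p j) y"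
      show "poly ?Q x \<noteq> 0"
      proof
        assume "poly ?Q x = 0"
        then obtain i where i: "i \<le> k" "x = ys i" using roots by auto
        have lo: "j = 0 \<or> ys (j - 1) < x" using x1 yi pin by auto
        have hi: "j = Suc k \<or> x < ys j" using x2 yi pin by auto
        show False
        proof (cases "j = 0")
          case True
          hence "x < ys 0" using hi by simp
          thus False using i ymono[of 0 i] by (cases "i = 0") auto
        next
          case False
          hence "ys (j-1) < ys i" using lo i by simp
          hence "j - 1 < i" using ylt[of "j-1" i] i j False by simp
          show False
          proof (cases "j = Suc k")
            case True thus False using \<open>j - 1 < i\<close> i by simp
          next
            case False
            hence "ys i < ys j" using hi i by simp
            hence "i < j" using ylt[of i j] i j False by simp
            thus False using \<open>j - 1 < i\<close> by simp
          qed
        qed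
      qed
    qed
  qed
qed

lemma IL_all:
  assumes "\<And>j. 1 \<le> j \<Longrightarrow> j \<le> m \<Longrightarrow> real j * (N - real j + 1) > 0"
  shows "k \<ge> 1 \<Longrightarrow> k \<le> Suc m \<Longrightarrow> IL N k"
proof (induction k)
  case (Suc k)
  show ?case
  proof (cases "k = 0")
    case True thus ?thesis using IL_1 by simp
  next
    case False
    thus ?thesis using Suc IL_step[of N k] assms[of k] by simp
  qed
qed simp

lemma Qp_card_roots:
  assumes "\<And>j. 1 \<le> j \<Longrightarrow> j \<le> m \<Longrightarrow> real j * (N - real j + 1) > 0"
  shows "card {x. poly (Qp N (Suc m)) x = 0} = Suc m"
proof -
  have "IL N (Suc m)" using IL_all[OF assms] by simp
  then obtain xs where H: "(\<forall>i i'. i < i' \<and> i' < Suc m \<longrightarrow> xs i < xs i') \<and>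
    (\<forall>j<Suc m. poly (Qp N (Suc m)) (xs j) = 0) \<and>
    (\<forall>j<Suc m. (-1)^(Suc m-1-j) * poly (Qp N (Suc m-1)) (xs j) > 0) \<and>
    (\<forall>j\<le>Suc m. \<forall>y. (j = 0 \<or> xs (j-1) < y) \<and> (j = Suc m \<or> y < xs j) \<longrightarrow> (-1)^(Suc m-j) * poly (Qp N (Suc m)) y > 0)"
    unfolding IL_def by (elim exE)
  have mono: "\<And>i i'. i < i' \<Longrightarrow> i' < Suc m \<Longrightarrow> xs i < xs i'" using H by simp
  have rt: "\<And>j. j < Suc m \<Longrightarrow> poly (Qp N (Suc m)) (xs j) = 0" using H by simp
  have inj: "inj_on xs {..m}"
  proof (rule inj_onI)
    fix a b assume "a \<in> {..m}" "b \<in> {..m}" "xs a = xs b"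
    thus "a = b" using mono[of a b] mono[of b a] by (cases a b rule: linorder_cases) auto
  qed
  have sub: "xs ` {..m} \<subseteq> {x. poly (Qp N (Suc m)) x = 0}" using rt by auto
  have fin: "finite {x. poly (Qp N (Suc m)) x = 0}" by (rule poly_roots_finite[OF Qp_nonzero])
  have "Suc m \<le> card {x. poly (Qp N (Suc m)) x = 0}"
    using card_mono[OF fin sub] card_image[OF inj] by simp
  moreover have "card {x. poly (Qp N (Suc m)) x = 0} \<le> Suc m"
    using card_poly_roots_bound[OF Qp_nonzero[of N "Suc m"]] Qp_degree[of N "Suc m"] by simp
  ultimately show ?thesis by simp
qed



definition kA :: "real \<Rightarrow> real fps" where "kA x = Abs_fps (\<lambda>l. (-1)^l * (x gchoose l))"
definition kG :: "nat \<Rightarrow> real \<Rightarrow> real fps" where "kG M x = kA x * fps_binomial (real M - x)"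

lemma kG_nth: "fps_nth (kG M x) k = krawtchouk M k x"
  unfolding kG_def kA_def krawtchouk_def fps_mult_nth by simp

lemma gb_step: "of_nat (Suc l) * ((a::real) gchoose Suc l) = (a - of_nat l) * (a gchoose l)"
  using gbinomial_mult_1[of a l] by (simp add: algebra_simps)

lemma kA_ode: "(1 - fps_X) * fps_deriv (kA x) = - fps_const x * kA x"
proof (rule fps_ext)
  fix n
  have e: "(1 - fps_X) * fps_deriv (kA x) = fps_deriv (kA x) - fps_X * fps_deriv (kA x)"
    by (simp add: algebra_simps)
  show "fps_nth ((1 - fps_X) * fps_deriv (kA x)) n = fps_nth (- fps_const x * kA x) n"
  proof (cases n)
    case 0 thus ?thesis unfolding e by (simp add: kA_def)
  next
    case (Suc m)
    have s2: "real (Suc (Suc m)) * (x gchoose Suc (Suc m)) = (x - real (Suc m)) * (x gchoose Suc m)"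
      using gb_step[of "Suc m" x] by simp
    have "fps_nth ((1 - fps_X) * fps_deriv (kA x)) n
        = real (Suc (Suc m)) * ((-1)^(Suc (Suc m)) * (x gchoose Suc (Suc m)))
          - real (Suc m) * ((-1)^(Suc m) * (x gchoose Suc m))"
      unfolding e using Suc by (simp add: kA_def algebra_simps)
    also have "\<dots> = (-1)^(Suc (Suc m)) * (real (Suc (Suc m)) * (x gchoose Suc (Suc m)))
          - real (Suc m) * ((-1)^(Suc m) * (x gchoose Suc m))" by (simp add: algebra_simps)
    also have "\<dots> = - x * ((-1)^(Suc m) * (x gchoose Suc m))"
      unfolding s2 by (simp add: algebra_simps)
    finally show ?thesis using Suc by (simp add: kA_def)
  qed
qed

lemma kB_ode: "(1 + fps_X) * fps_deriv (fps_binomial y) = fps_const (y::real) * fps_binomial y"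
proof (rule fps_ext)
  fix n
  have e: "(1 + fps_X) * fps_deriv (fps_binomial y) = fps_deriv (fps_binomial y) + fps_X * fps_deriv (fps_binomial y)"
    by (simp add: algebra_simps)
  show "fps_nth ((1 + fps_X) * fps_deriv (fps_binomial y)) n = fps_nth (fps_const y * fps_binomial y) n"
  proof (cases n)
    case 0 thus ?thesis unfolding e by simp
  next
    case (Suc m)
    have s2: "real (Suc (Suc m)) * (y gchoose Suc (Suc m)) = (y - real (Suc m)) * (y gchoose Suc m)"
      using gb_step[of "Suc m" y] by simp
    have "fps_nth ((1 + fps_X) * fps_deriv (fps_binomial y)) n
        = real (Suc (Suc m)) * (y gchoose Suc (Suc m)) + real (Suc m) * (y gchoose Suc m)"
      unfolding e using Suc by (simp add: algebra_simps)
    also have "\<dots> = y * (y gchoose Suc m)" unfolding s2 by (simp add: algebra_simps)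
    finally show ?thesis using Suc by simp
  qed
qed

lemma ring_aux: "(1 + X) * B * (- cx * A) + (1 - X) * A * (cy * B) = (cy - cx - (cx + cy) * X) * (A * (B::'a::comm_ring_1))"
  by (simp add: algebra_simps)

lemma kG_ode: "(1 - fps_X^2) * fps_deriv (kG M x) =
   (fps_const (real M - 2*x) - fps_const (real M) * fps_X) * kG M x"
proof -
  define A where "A = kA x"
  define B where "B = fps_binomial (real M - x)"
  have a: "(1 - fps_X) * fps_deriv A = - fps_const x * A" unfolding A_def by (rule kA_ode)
  have b: "(1 + fps_X) * fps_deriv B = fps_const (real M - x) * B" unfolding B_def by (rule kB_ode)
  have "(1 - fps_X^2) * fps_deriv (kG M x) = (1 + fps_X) * B * ((1 - fps_X) * fps_deriv A) + (1 - fps_X) * A * ((1 + fps_X) * fps_deriv B)"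
    unfolding kG_def A_def[symmetric] B_def[symmetric] by (simp add: algebra_simps power2_eq_square)
  also have "\<dots> = (1 + fps_X) * B * (- fps_const x * A) + (1 - fps_X) * A * (fps_const (real M - x) * B)"
    unfolding a b ..
  also have "\<dots> = (fps_const (real M - x) - fps_const x - (fps_const x + fps_const (real M - x)) * fps_X) * (A * B)"
    by (rule ring_aux)
  also have "\<dots> = (fps_const (real M - 2*x) - fps_const (real M) * fps_X) * kG M x"
  proof -
    have "fps_const (real M - x) - fps_const x = fps_const (real M - 2*x)" by simp
    moreover have "fps_const x + fps_const (real M - x) = fps_const (real M)" by simp
    ultimately show ?thesis unfolding kG_def A_def[symmetric] B_def[symmetric] by simp
  qed
  finally show ?thesis .
qed

lemma kG_rec: "real (Suc k) * fps_nth (kG M x) (Suc k) = (real M - 2*x) * fps_nth (kG M x) k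
    - (if k = 0 then 0 else (real M - real k + 1) * fps_nth (kG M x) (k-1))"
proof -
  let ?G = "kG M x"
  have "fps_nth ((1 - fps_X^2) * fps_deriv ?G) k = fps_nth ((fps_const (real M - 2*x) - fps_const (real M) * fps_X) * ?G) k"
    by (simp only: kG_ode)
  moreover have "fps_nth ((1 - fps_X^2) * fps_deriv ?G) k = real (Suc k) * fps_nth (?G) (Suc k) - (if k < 2 then 0 else real (k - 1) * fps_nth (?G) (k - 1))"
  proof -
    have "(1 - fps_X^2) * fps_deriv ?G = fps_deriv ?G - fps_X^2 * fps_deriv ?G" by (simp add: algebra_simps)
    moreover have "fps_nth (fps_X^2 * fps_deriv ?G) k = (if k < 2 then 0 else real (k - 1) * fps_nth (?G) (k - 1))"
      unfolding fps_X_power_mult_nth by (cases k) (auto simp: Suc_diff_le of_nat_diff)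
    ultimately show ?thesis by (simp add: add.commute)
  qed
  moreover have "fps_nth ((fps_const (real M - 2*x) - fps_const (real M) * fps_X) * ?G) k
      = (real M - 2*x) * fps_nth (?G) k - (if k = 0 then 0 else real M * fps_nth (?G) (k-1))"
    by (simp add: algebra_simps mult.assoc)
  ultimately have "real (Suc k) * fps_nth (?G) (Suc k) - (if k < 2 then 0 else real (k - 1) * fps_nth (?G) (k - 1))
      = (real M - 2*x) * fps_nth (?G) k - (if k = 0 then 0 else real M * fps_nth (?G) (k-1))" by simp
  thus ?thesis by (cases "k < 2") (auto simp: algebra_simps of_nat_diff)
qed

lemma kraw_Qp: "fact k * krawtchouk M k x = poly (Qp (real M) k) (real M - 2*x)"
proof -
  have "fact k * fps_nth (kG M x) k = poly (Qp (real M) k) (real M - 2*x) \<and>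
        fact (Suc k) * fps_nth (kG M x) (Suc k) = poly (Qp (real M) (Suc k)) (real M - 2*x)" for k
  proof (induction k)
    case 0
    have "fps_nth (kG M x) 0 = 1" by (simp add: kG_def kA_def)
    moreover have "fps_nth (kG M x) (Suc 0) = real M - 2 * x" by (simp add: kG_def kA_def)
    ultimately show ?case by simp
  next
    case (Suc k)
    have r: "real (Suc (Suc k)) * fps_nth (kG M x) (Suc (Suc k)) = (real M - 2*x) * fps_nth (kG M x) (Suc k)
       - (real M - real (Suc k) + 1) * fps_nth (kG M x) k" using kG_rec[of "Suc k" M x] by simp
    have "fact (Suc (Suc k)) * fps_nth (kG M x) (Suc (Suc k)) = fact (Suc k) * (real (Suc (Suc k)) * fps_nth (kG M x) (Suc (Suc k)))"
      by (simp add: algebra_simps)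
    also have "\<dots> = (real M - 2*x) * (fact (Suc k) * fps_nth (kG M x) (Suc k)) - real (Suc k) * (real M - real k) * (fact k * fps_nth (kG M x) k)"
      unfolding r by (simp add: algebra_simps)
    also have "\<dots> = poly (Qp (real M) (Suc (Suc k))) (real M - 2*x)"
      using Suc.IH by (simp add: algebra_simps)
    finally show ?case using Suc.IH by simp
  qed
  thus ?thesis using kG_nth by metis
qed



definition Ssum :: "nat \<Rightarrow> (nat set \<Rightarrow> real) \<Rightarrow> nat set \<Rightarrow> real" where
  "Ssum t h y = (\<Sum>x\<in>{x. x \<subseteq> y \<and> card x = t}. h x)"

lemma finite_subsets_card: "finite y \<Longrightarrow> finite {x. x \<subseteq> y \<and> card x = t}"
  by (rule finite_subset[of _ "Pow y"]) auto

lemma L1: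
  assumes "finite y"
  shows "(\<Sum>a\<in>y. Ssum t h (y - {a})) = real (card y - t) * Ssum t h y"
proof -
  let ?P = "{x. x \<subseteq> y \<and> card x = t}"
  have fP: "finite ?P" using finite_subsets_card[OF assms] .
  have "(\<Sum>a\<in>y. Ssum t h (y - {a})) = (\<Sum>a\<in>y. \<Sum>x\<in>?P. if a \<notin> x then h x else 0)"
  proof (rule sum.cong[OF refl])
    fix a assume "a \<in> y"
    have e: "{x. x \<subseteq> y - {a} \<and> card x = t} = {x\<in>?P. a \<notin> x}" by auto
    have "Ssum t h (y - {a}) = sum h {x\<in>?P. a \<notin> x}" unfolding Ssum_def e ..
    also have "\<dots> = (\<Sum>x\<in>?P. if a \<notin> x then h x else 0)" by (rule sum.inter_filter[OF fP])
    finally show "Ssum t h (y - {a}) = (\<Sum>x\<in>?P. if a \<notin> x then h x else 0)" .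
  qed
  also have "\<dots> = (\<Sum>x\<in>?P. \<Sum>a\<in>y. if a \<notin> x then h x else 0)" by (rule sum.swap)
  also have "\<dots> = (\<Sum>x\<in>?P. real (card y - t) * h x)"
  proof (rule sum.cong[OF refl])
    fix x assume x: "x \<in> ?P"
    have "(\<Sum>a\<in>y. if a \<notin> x then h x else 0) = (\<Sum>a\<in>{a\<in>y. a \<notin> x}. h x)"
      by (rule sum.inter_filter[OF assms, symmetric])
    also have "{a\<in>y. a \<notin> x} = y - x" by auto
    also have "card (y - x) = card y - t" using x assms by (metis (mono_tags, lifting) card_Diff_subset finite_subset mem_Collect_eq)
    ultimately show "(\<Sum>a\<in>y. if a \<notin> x then h x else 0) = real (card y - t) * h x" by simp
  qed
  also have "\<dots> = real (card y - t) * Ssum t h y" unfolding Ssum_def by (simp add: sum_distrib_left)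
  finally show ?thesis .
qed

lemma L3:
  fixes F G :: "nat set \<Rightarrow> real"
  assumes "i \<ge> 1"
  shows "(\<Sum>y\<in>sphere_layer n i. F y * (\<Sum>a\<in>y. G (y - {a})))
       = (\<Sum>w\<in>sphere_layer n (i - 1). G w * (\<Sum>a\<in>{1..n} - w. F (insert a w)))"
proof -
  let ?A = "Sigma (sphere_layer n i) (\<lambda>y. y)"
  let ?B = "Sigma (sphere_layer n (i - 1)) (\<lambda>w. {1..n} - w)"
  have fL: "finite (sphere_layer n j)" for j
    unfolding sphere_layer_def by (rule finite_subset[of _ "Pow {1..n}"]) auto
  have fin_elem: "finite y" if "y \<in> sphere_layer n j" for y j
    using that unfolding sphere_layer_def by (auto intro: finite_subset)
  have "(\<Sum>y\<in>sphere_layer n i. F y * (\<Sum>a\<in>y. G (y - {a}))) = (\<Sum>(y,a)\<in>?A. F y * G (y - {a}))"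
    by (simp add: sum.Sigma[symmetric] fL fin_elem sum_distrib_left)
  also have "\<dots> = (\<Sum>(w,a)\<in>?B. G w * F (insert a w))"
  proof (rule sum.reindex_bij_witness[of _ "\<lambda>(w,a). (insert a w, a)" "\<lambda>(y,a). (y - {a}, a)"])
    fix p assume p: "p \<in> ?A"
    obtain y a where pa: "p = (y, a)" by (cases p)
    have y: "y \<subseteq> {1..n}" "card y = i" "a \<in> y" using p pa unfolding sphere_layer_def by auto
    have fy: "finite y" using y(1) by (rule finite_subset) simp
    show "(case case p of (y, a) \<Rightarrow> (y - {a}, a) of (w, a) \<Rightarrow> (insert a w, a)) = p"
      using pa y by auto
    show "(case p of (y, a) \<Rightarrow> (y - {a}, a)) \<in> ?B"
      using pa y fy assms unfolding sphere_layer_def by auto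
    show "(case case p of (y, a) \<Rightarrow> (y - {a}, a) of (w, a) \<Rightarrow> G w * F (insert a w)) = (case p of (y, a) \<Rightarrow> F y * G (y - {a}))"
      using pa y by (simp add: insert_absorb mult.commute)
  next
    fix q assume q: "q \<in> ?B"
    obtain w a where qa: "q = (w, a)" by (cases q)
    have w: "w \<subseteq> {1..n}" "card w = i - 1" "a \<in> {1..n}" "a \<notin> w" using q qa unfolding sphere_layer_def by auto
    have fw: "finite w" using w(1) by (rule finite_subset) simp
    show "(case case q of (w, a) \<Rightarrow> (insert a w, a) of (y, a) \<Rightarrow> (y - {a}, a)) = q"
      using qa w by auto
    show "(case q of (w, a) \<Rightarrow> (insert a w, a)) \<in> ?A"
      using qa w fw assms unfolding sphere_layer_def by auto
  qed
  also have "\<dots> = (\<Sum>w\<in>sphere_layer n (i - 1). G w * (\<Sum>a\<in>{1..n} - w. F (insert a w)))"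
    by (simp add: sum.Sigma[symmetric] fL sum_distrib_left)
  finally show ?thesis .
qed

lemma card_le_n: "y \<subseteq> {1..n} \<Longrightarrow> card y \<le> n"
  using card_mono[of "{1..n}" y] by simp

lemma finite_sub_n: "y \<subseteq> {1..(n::nat)} \<Longrightarrow> finite y"
  by (rule finite_subset) auto

lemma Ssum_insert:
  assumes fy: "finite y" and a: "a \<notin> y"
  shows "Ssum (Suc s) h (insert a y) = Ssum (Suc s) h y + (\<Sum>x'\<in>{x. x \<subseteq> y \<and> card x = s}. h (insert a x'))"
proof -
  let ?P = "{x. x \<subseteq> y \<and> card x = Suc s}"
  let ?P' = "{x. x \<subseteq> y \<and> card x = s}"
  have eq: "{x. x \<subseteq> insert a y \<and> card x = Suc s} = ?P \<union> insert a ` ?P'"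
  proof (intro equalityI subsetI)
    fix x assume x: "x \<in> {x. x \<subseteq> insert a y \<and> card x = Suc s}"
    show "x \<in> ?P \<union> insert a ` ?P'"
    proof (cases "a \<in> x")
      case True
      have "x - {a} \<in> ?P'" using x True fy by (auto simp: finite_subset)
      moreover have "x = insert a (x - {a})" using True by auto
      ultimately show ?thesis by blast
    next
      case False thus ?thesis using x by auto
    qed
  next
    fix x assume "x \<in> ?P \<union> insert a ` ?P'"
    thus "x \<in> {x. x \<subseteq> insert a y \<and> card x = Suc s}"
    proof
      assume "x \<in> ?P" thus ?thesis by auto
    next
      assume "x \<in> insert a ` ?P'"
      then obtain x' where x': "x' \<in> ?P'" "x = insert a x'" by auto
      have fx: "finite x'" using x' fy by (auto intro: finite_subset)
      have "a \<notin> x'" using x' a by auto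
      thus ?thesis using x' fx by auto
    qed
  qed
  have fP: "finite ?P" "finite ?P'" using finite_subsets_card[OF fy] by auto
  have disj: "?P \<inter> insert a ` ?P' = {}" using a by auto
  have inj: "inj_on (insert a) ?P'"
    by (rule inj_onI) (use a in \<open>auto simp: insert_ident\<close>)
  have "Ssum (Suc s) h (insert a y) = sum h ?P + sum h (insert a ` ?P')"
    unfolding Ssum_def eq using fP disj by (simp add: sum.union_disjoint)
  also have "sum h (insert a ` ?P') = (\<Sum>x'\<in>?P'. h (insert a x'))"
    using sum.reindex[OF inj] by simp
  finally show ?thesis unfolding Ssum_def .
qed

lemma L2:
  assumes Kc: "\<And>w. w \<subseteq> {1..n} \<Longrightarrow> card w + 1 = t \<Longrightarrow> (\<Sum>a\<in>{1..n}-w. h (insert a w)) = 0"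
  and y: "y \<subseteq> {1..n}"
  shows "(\<Sum>a\<in>{1..n}-y. Ssum t h (insert a y)) = (real n - real (card y) - real t) * Ssum t h y"
proof -
  have fy: "finite y" using finite_sub_n[OF y] .
  have cd: "card ({1..n} - y) = n - card y" using y by (simp add: card_Diff_subset fy)
  have cy: "card y \<le> n" using card_le_n[OF y] .
  show ?thesis
  proof (cases t)
    case 0
    have z: "{x. x \<subseteq> Y \<and> card x = 0} = {{}}" if "finite Y" for Y :: "nat set"
      using that by (auto dest: finite_subset)
    have "Ssum 0 h (insert a y) = Ssum 0 h y" for a
      unfolding Ssum_def using fy z[of y] z[of "insert a y"] by simp
    hence "(\<Sum>a\<in>{1..n}-y. Ssum t h (insert a y)) = real (n - card y) * Ssum t h y"
      using 0 cd by simp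
    thus ?thesis using 0 cy by (simp add: of_nat_diff)
  next
    case (Suc s)
    let ?P = "{x. x \<subseteq> y \<and> card x = Suc s}"
    let ?P' = "{x. x \<subseteq> y \<and> card x = s}"
    have fP: "finite ?P" "finite ?P'" using finite_subsets_card[OF fy] by auto
    have "(\<Sum>a\<in>{1..n}-y. Ssum t h (insert a y))
        = (\<Sum>a\<in>{1..n}-y. Ssum t h y + (\<Sum>x'\<in>?P'. h (insert a x')))"
      using Ssum_insert[OF fy] Suc by simp
    also have "\<dots> = (\<Sum>a\<in>{1..n}-y. Ssum t h y) + (\<Sum>a\<in>{1..n}-y. \<Sum>x'\<in>?P'. h (insert a x'))"
      by (rule sum.distrib)
    also have "(\<Sum>a\<in>{1..n}-y. Ssum t h y) = real (n - card y) * Ssum t h y" using cd by simp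
    also have "(\<Sum>a\<in>{1..n}-y. \<Sum>x'\<in>?P'. h (insert a x')) = (\<Sum>x'\<in>?P'. \<Sum>a\<in>{1..n}-y. h (insert a x'))"
      by (rule sum.swap)
    also have "(\<Sum>x'\<in>?P'. \<Sum>a\<in>{1..n}-y. h (insert a x')) = (\<Sum>x'\<in>?P'. - (\<Sum>a\<in>y - x'. h (insert a x')))"
    proof (rule sum.cong[OF refl])
      fix x' assume x': "x' \<in> ?P'"
      have spl: "{1..n} - x' = ({1..n} - y) \<union> (y - x')" using x' y by auto
      have "(\<Sum>a\<in>{1..n}-x'. h (insert a x')) = 0" using Kc[of x'] x' y Suc by auto
      moreover have "(\<Sum>a\<in>{1..n}-x'. h (insert a x')) = (\<Sum>a\<in>{1..n}-y. h (insert a x')) + (\<Sum>a\<in>y - x'. h (insert a x'))"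
        unfolding spl by (rule sum.union_disjoint) (use fy in auto)
      ultimately show "(\<Sum>a\<in>{1..n}-y. h (insert a x')) = - (\<Sum>a\<in>y - x'. h (insert a x'))" by simp
    qed
    also have "(\<Sum>x'\<in>?P'. - (\<Sum>a\<in>y - x'. h (insert a x'))) = - real t * Ssum t h y"
    proof -
      have "(\<Sum>x'\<in>?P'. \<Sum>a\<in>y - x'. h (insert a x')) = (\<Sum>(x',a)\<in>Sigma ?P' (\<lambda>x'. y - x'). h (insert a x'))"
        using fP fy by (simp add: sum.Sigma)
      also have "\<dots> = (\<Sum>(x,a)\<in>Sigma ?P (\<lambda>x. x). h x)"
      proof (rule sum.reindex_bij_witness[of _ "\<lambda>(x,a). (x - {a}, a)" "\<lambda>(x',a). (insert a x', a)"])
        fix q assume q: "q \<in> Sigma ?P' (\<lambda>x'. y - x')"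
        obtain x' a where qa: "q = (x', a)" by (cases q)
        have xa: "x' \<subseteq> y" "card x' = s" "a \<in> y" "a \<notin> x'" using q qa by auto
        have fx: "finite x'" using xa(1) fy by (rule finite_subset)
        show "(case case q of (x', a) \<Rightarrow> (insert a x', a) of (x, a) \<Rightarrow> (x - {a}, a)) = q"
          using qa xa by auto
        show "(case q of (x', a) \<Rightarrow> (insert a x', a)) \<in> Sigma ?P (\<lambda>x. x)"
          using qa xa fx by auto
        show "(case case q of (x', a) \<Rightarrow> (insert a x', a) of (x, a) \<Rightarrow> h x) = (case q of (x', a) \<Rightarrow> h (insert a x'))"
          using qa by simp
      next
        fix q assume q: "q \<in> Sigma ?P (\<lambda>x. x)"
        obtain x a where qa: "q = (x, a)" by (cases q)
        have xa: "x \<subseteq> y" "card x = Suc s" "a \<in> x" using q qa by auto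
        have fx: "finite x" using xa(1) fy by (rule finite_subset)
        show "(case case q of (x, a) \<Rightarrow> (x - {a}, a) of (x', a) \<Rightarrow> (insert a x', a)) = q"
          using qa xa by auto
        show "(case q of (x, a) \<Rightarrow> (x - {a}, a)) \<in> Sigma ?P' (\<lambda>x'. y - x')"
          using qa xa fx by auto
      qed
      also have "\<dots> = (\<Sum>x\<in>?P. \<Sum>a\<in>x. h x)"
        by (rule sum.Sigma[symmetric]) (use fP fy in \<open>auto intro: finite_subset\<close>)
      also have "\<dots> = (\<Sum>x\<in>?P. real t * h x)"
        by (rule sum.cong[OF refl]) (simp add: Suc)
      also have "\<dots> = real t * Ssum t h y" unfolding Ssum_def Suc by (simp add: sum_distrib_left)
      finally show ?thesis by (simp add: sum_negf)
    qed
    finally show ?thesis using cy by (simp add: of_nat_diff algebra_simps)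
  qed
qed



lemma hball_eq: "hball n r = {x. x \<subseteq> {1..n} \<and> card x \<le> r}"
  unfolding hball_def sphere_layer_def by auto

lemma hdist_sym: "hdist x y = hdist y x"
  unfolding hdist_def by (simp add: Un_commute)

lemma hdist_remove: "a \<in> y \<Longrightarrow> hdist y (y - {a}) = 1"
proof -
  assume "a \<in> y"
  hence "(y - (y - {a})) \<union> ((y - {a}) - y) = {a}" by auto
  thus ?thesis unfolding hdist_def by simp
qed

lemma hdist_insert: "a \<notin> y \<Longrightarrow> hdist y (insert a y) = 1"
proof -
  assume "a \<notin> y"
  hence "(y - insert a y) \<union> (insert a y - y) = {a}" by auto
  thus ?thesis unfolding hdist_def by simp
qed

lemma hdist_one:
  assumes "hdist y z = 1"
  shows "(\<exists>a\<in>y. z = y - {a}) \<or> (\<exists>a. a \<notin> y \<and> z = insert a y)"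
proof -
  have "card ((y - z) \<union> (z - y)) = Suc 0" using assms unfolding hdist_def by simp
  then obtain a where a: "(y - z) \<union> (z - y) = {a}" by (auto simp: card_1_singleton_iff)
  have ax: "(x \<in> y \<and> x \<notin> z \<or> x \<in> z \<and> x \<notin> y) \<longleftrightarrow> x = a" for x
  proof -
    have "x \<in> (y - z) \<union> (z - y) \<longleftrightarrow> x \<in> {a}" using a by simp
    thus ?thesis by simp
  qed
  show ?thesis
  proof (cases "a \<in> y")
    case True
    have "z = y - {a}"
    proof (rule set_eqI)
      fix x show "x \<in> z \<longleftrightarrow> x \<in> y - {a}" using ax[of x] ax[of a] True by blast
    qed
    thus ?thesis using True by blast
  next
    case False
    have "z = insert a y"
    proof (rule set_eqI)
      fix x show "x \<in> z \<longleftrightarrow> x \<in> insert a y" using ax[of x] ax[of a] False by blast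
    qed
    thus ?thesis using False by blast
  qed
qed

lemma adj_formula:
  assumes y: "y \<in> hball n r" and f: "f \<in> funs_on (hball n r)"
  shows "adj_op n r f y = (\<Sum>a\<in>y. f (y - {a})) + (\<Sum>a\<in>{1..n}-y. f (insert a y))"
proof -
  have yn: "y \<subseteq> {1..n}" using y by (simp add: hball_eq)
  have fy: "finite y" using finite_sub_n[OF yn] .
  let ?N1 = "(\<lambda>a. y - {a}) ` y"
  let ?N2 = "(\<lambda>a. insert a y) ` ({1..n} - y)"
  let ?S = "{z\<in>hball n r. hdist y z = 1}"
  have sub: "?S \<subseteq> ?N1 \<union> ?N2"
  proof
    fix z assume z: "z \<in> ?S"
    hence zn: "z \<subseteq> {1..n}" by (simp add: hball_eq)
    have "hdist y z = 1" using z by simp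
    from hdist_one[OF this] show "z \<in> ?N1 \<union> ?N2"
    proof (elim disjE bexE exE conjE)
      fix a assume "a \<in> y" "z = y - {a}" thus ?thesis by blast
    next
      fix a assume "a \<notin> y" "z = insert a y"
      moreover hence "a \<in> {1..n}" using zn by auto
      ultimately show ?thesis by blast
    qed
  qed
  have zero: "f z = 0" if "z \<in> (?N1 \<union> ?N2) - ?S" for z
  proof -
    have "hdist y z = 1" using that hdist_remove hdist_insert by auto
    hence "z \<notin> hball n r" using that by auto
    thus ?thesis using f unfolding funs_on_def by auto
  qed
  have fin: "finite (?N1 \<union> ?N2)" using fy by auto
  have "adj_op n r f y = sum f ?S" using y unfolding adj_op_def by simp
  also have "\<dots> = sum f (?N1 \<union> ?N2)"
    by (rule sum.mono_neutral_left[OF fin sub]) (use zero in auto)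
  also have "\<dots> = sum f ?N1 + sum f ?N2"
    by (rule sum.union_disjoint) (use fy in auto)
  also have "sum f ?N1 = (\<Sum>a\<in>y. f (y - {a}))"
    by (rule sum.reindex_cong[of "\<lambda>a. y - {a}"]) (auto simp: inj_on_def)
  also have "sum f ?N2 = (\<Sum>a\<in>{1..n}-y. f (insert a y))"
    by (rule sum.reindex_cong[of "\<lambda>a. insert a y"]) (auto simp: inj_on_def insert_ident)
  finally show ?thesis .
qed

definition binner :: "nat \<Rightarrow> nat \<Rightarrow> (nat set \<Rightarrow> real) \<Rightarrow> (nat set \<Rightarrow> real) \<Rightarrow> real" where
  "binner n r f g = (\<Sum>x\<in>hball n r. f x * g x)"

lemma finite_hball: "finite (hball n r)"
  unfolding hball_eq by (rule finite_subset[of _ "Pow {1..n}"]) auto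

lemma adj_sum_expand:
  assumes x: "x \<in> hball n r"
  shows "adj_op n r f x * g x = (\<Sum>y\<in>hball n r. if hdist x y = 1 then f y * g x else 0)"
proof -
  have "adj_op n r f x * g x = (\<Sum>y\<in>{y\<in>hball n r. hdist x y = 1}. f y * g x)"
    using x unfolding adj_op_def by (simp add: sum_distrib_right)
  also have "\<dots> = (\<Sum>y\<in>hball n r. if hdist x y = 1 then f y * g x else 0)"
    by (rule sum.inter_filter[OF finite_hball])
  finally show ?thesis .
qed

lemma adj_selfadj: "binner n r (adj_op n r f) g = binner n r f (adj_op n r g)"
proof -
  let ?B = "hball n r"
  have "binner n r (adj_op n r f) g = (\<Sum>x\<in>?B. \<Sum>y\<in>?B. if hdist x y = 1 then f y * g x else 0)"
    unfolding binner_def by (rule sum.cong[OF refl]) (rule adj_sum_expand)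
  also have "\<dots> = (\<Sum>y\<in>?B. \<Sum>x\<in>?B. if hdist x y = 1 then f y * g x else 0)" by (rule sum.swap)
  also have "\<dots> = (\<Sum>y\<in>?B. \<Sum>x\<in>?B. if hdist y x = 1 then g x * f y else 0)"
  proof (rule sum.cong[OF refl], rule sum.cong[OF refl])
    fix y x show "(if hdist x y = 1 then f y * g x else 0) = (if hdist y x = 1 then g x * f y else 0)"
      by (simp add: hdist_sym[of x y] mult.commute[of "f y" "g x"])
  qed
  also have "\<dots> = binner n r f (adj_op n r g)"
    unfolding binner_def
  proof (rule sum.cong[OF refl])
    fix y assume y: "y \<in> ?B"
    have "f y * adj_op n r g y = adj_op n r g y * f y" by (rule mult.commute)
    also have "\<dots> = (\<Sum>x\<in>?B. if hdist y x = 1 then g x * f y else 0)" by (rule adj_sum_expand[OF y])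
    finally show "(\<Sum>x\<in>?B. if hdist y x = 1 then g x * f y else 0) = f y * adj_op n r g y" by simp
  qed
  finally show ?thesis .
qed


definition ffN :: "real \<Rightarrow> nat \<Rightarrow> real" where "ffN N k = (\<Prod>j<k. (N - real j))"
definition cc :: "real \<Rightarrow> real \<Rightarrow> nat \<Rightarrow> real" where "cc N mu k = poly (Qp N k) mu / ffN N k"

lemma ffN_Suc: "ffN N (Suc k) = ffN N k * (N - real k)"
  unfolding ffN_def by simp

lemma ffN_pos: "(\<And>j. j < k \<Longrightarrow> N - real j > 0) \<Longrightarrow> ffN N k > 0"
  unfolding ffN_def by (rule prod_pos) auto

lemma cc_0: "cc N mu 0 = 1" unfolding cc_def ffN_def by simp

lemma jac_arith1: "(F::real) \<noteq> 0 \<Longrightarrow> Q1 = mu * Q - A \<Longrightarrow> A / F + Q1 / F = mu * (Q / F)"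
proof -
  assume F: "F \<noteq> 0" and q: "Q1 = mu * Q - A"
  have "A / F + Q1 / F = (A + Q1) / F" by (simp add: add_divide_distrib)
  also have "A + Q1 = mu * Q" using q by simp
  finally show ?thesis by simp
qed

lemma jac_arith2: "(d::real) \<noteq> 0 \<Longrightarrow> F' \<noteq> 0 \<Longrightarrow> kk * (P / F') = kk * d * P / (F' * d)"
  by simp

lemma JAC:
  assumes pos: "\<And>j. j < m \<Longrightarrow> N - real j > 0" and root: "poly (Qp N (Suc m)) mu = 0" and km: "k \<le> m"
  shows "(if k \<ge> 1 then real k * cc N mu (k-1) else 0) + (if k < m then (N - real k) * cc N mu (Suc k) else 0)
         = mu * cc N mu k"
proof -
  have fk: "ffN N k > 0" using ffN_pos[of k N] pos km by simp
  define A where "A = (if k = 0 then 0 else real k * (N - real k + 1) * poly (Qp N (k - 1)) mu)"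
  have rec: "poly (Qp N (Suc k)) mu = mu * poly (Qp N k) mu - A"
    unfolding A_def by (rule Qp_rec)
  have t1: "(if k \<ge> 1 then real k * cc N mu (k-1) else 0) = A / ffN N k"
  proof (cases k)
    case 0 thus ?thesis by (simp add: A_def)
  next
    case (Suc k')
    have f1: "ffN N k = ffN N k' * (N - real k')" using Suc ffN_Suc by simp
    have f2: "N - real k' = N - real k + 1" using Suc by simp
    have f3: "ffN N k' \<noteq> 0" using ffN_pos[of k' N] pos km Suc by simp
    have f4: "N - real k' \<noteq> 0" using pos[of k'] km Suc by simp
    have "real k * cc N mu k' = real k * (N - real k') * poly (Qp N k') mu / (ffN N k' * (N - real k'))"
      unfolding cc_def by (rule jac_arith2[OF f4 f3])
    also have "\<dots> = A / ffN N k"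
    proof -
      have "k \<noteq> 0" "k - 1 = k'" using Suc by auto
      hence "A = real k * (N - real k') * poly (Qp N k') mu" unfolding A_def using f2 by simp
      thus ?thesis unfolding f1 by simp
    qed
    finally show ?thesis using Suc by simp
  qed
  show ?thesis
  proof (cases "k < m")
    case True
    have d: "N - real k \<noteq> 0" using pos True by (simp add: less_imp_neq[symmetric])
    have t2: "(N - real k) * cc N mu (Suc k) = poly (Qp N (Suc k)) mu / ffN N k"
      unfolding cc_def ffN_Suc using d by simp
    have "A / ffN N k + poly (Qp N (Suc k)) mu / ffN N k = mu * (poly (Qp N k) mu / ffN N k)"
      by (rule jac_arith1[OF _ rec]) (use fk in simp)
    thus ?thesis unfolding t1 using True t2 by (simp add: cc_def)
  next
    case False
    hence "k = m" using km by simp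
    hence r0: "poly (Qp N (Suc k)) mu = 0" using root by simp
    have "A / ffN N k + poly (Qp N (Suc k)) mu / ffN N k = mu * (poly (Qp N k) mu / ffN N k)"
      by (rule jac_arith1[OF _ rec]) (use fk in simp)
    thus ?thesis unfolding t1 using False r0 by (simp add: cc_def)
  qed
qed

definition Kt :: "nat \<Rightarrow> nat \<Rightarrow> (nat set \<Rightarrow> real) set" where
  "Kt n t = {h \<in> funs_on (sphere_layer n t). \<forall>w. w \<subseteq> {1..n} \<and> card w + 1 = t \<longrightarrow> (\<Sum>a\<in>{1..n}-w. h (insert a w)) = 0}"

definition Phi :: "nat \<Rightarrow> nat \<Rightarrow> nat \<Rightarrow> real \<Rightarrow> (nat set \<Rightarrow> real) \<Rightarrow> (nat set \<Rightarrow> real)" where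
  "Phi n r t mu h = (\<lambda>y. if y \<in> hball n r then cc (real n - 2 * real t) mu (card y - t) * Ssum t h y else 0)"

lemma Ssum_small: "finite y \<Longrightarrow> card y < t \<Longrightarrow> Ssum t h y = 0"
proof -
  assume fy: "finite y" and c: "card y < t"
  have e: "{x. x \<subseteq> y \<and> card x = t} = {}"
  proof (rule ccontr)
    assume "{x. x \<subseteq> y \<and> card x = t} \<noteq> {}"
    then obtain x where x: "x \<subseteq> y" "card x = t" by blast
    have "card x \<le> card y" using card_mono[OF fy x(1)] .
    thus False using x(2) c by simp
  qed
  show ?thesis unfolding Ssum_def e by simp
qed

lemma Phi_funs: "Phi n r t mu h \<in> funs_on (hball n r)"
  unfolding funs_on_def Phi_def by simp

lemma Phi_eigen:
  assumes rn: "2*r \<le> n" and tr: "t \<le> r" and root: "poly (Qp (real n - 2*real t) (Suc (r - t))) mu = 0"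
    and h: "h \<in> Kt n t"
  shows "adj_op n r (Phi n r t mu h) = fscale mu (Phi n r t mu h)"
proof (rule ext)
  fix y
  let ?N = "real n - 2 * real t"
  let ?c = "cc ?N mu"
  let ?S = "Ssum t h"
  let ?F = "Phi n r t mu h"
  show "adj_op n r ?F y = fscale mu ?F y"
  proof (cases "y \<in> hball n r")
    case False thus ?thesis by (simp add: adj_op_def fscale_def Phi_def)
  next
    case True
    have yn: "y \<subseteq> {1..n}" and yr: "card y \<le> r" using True by (auto simp: hball_eq)
    have fy: "finite y" using finite_sub_n[OF yn] .
    define i where "i = card y"
    have s1: "(\<Sum>a\<in>y. ?F (y - {a})) = ?c (i - 1 - t) * (real (i - t) * ?S y)"
    proof -
      have "(\<Sum>a\<in>y. ?F (y - {a})) = (\<Sum>a\<in>y. ?c (i - 1 - t) * ?S (y - {a}))"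
      proof (rule sum.cong[OF refl])
        fix a assume a: "a \<in> y"
        have "card (y - {a}) \<le> card y" by (rule card_Diff1_le)
        hence "y - {a} \<in> hball n r" using yn yr by (auto simp: hball_eq)
        moreover have "card (y - {a}) = i - 1" using a fy by (simp add: i_def)
        ultimately show "?F (y - {a}) = ?c (i - 1 - t) * ?S (y - {a})" by (simp add: Phi_def)
      qed
      also have "\<dots> = ?c (i - 1 - t) * (real (i - t) * ?S y)"
        by (simp add: sum_distrib_left[symmetric] L1[OF fy] i_def)
      finally show ?thesis .
    qed
    have Kc: "\<And>w. w \<subseteq> {1..n} \<Longrightarrow> card w + 1 = t \<Longrightarrow> (\<Sum>a\<in>{1..n}-w. h (insert a w)) = 0"
      using h unfolding Kt_def by blast
    have s2: "(\<Sum>a\<in>{1..n}-y. ?F (insert a y)) = (if i < r then ?c (Suc i - t) * ((real n - real i - real t) * ?S y) else 0)"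
    proof (cases "i < r")
      case True
      have "(\<Sum>a\<in>{1..n}-y. ?F (insert a y)) = (\<Sum>a\<in>{1..n}-y. ?c (Suc i - t) * ?S (insert a y))"
      proof (rule sum.cong[OF refl])
        fix a assume a: "a \<in> {1..n}-y"
        have ci: "card (insert a y) = Suc i" using a fy by (simp add: i_def)
        have "insert a y \<in> hball n r" using a yn ci True by (auto simp: hball_eq)
        thus "?F (insert a y) = ?c (Suc i - t) * ?S (insert a y)" using ci by (simp add: Phi_def)
      qed
      also have "\<dots> = ?c (Suc i - t) * (\<Sum>a\<in>{1..n}-y. ?S (insert a y))" by (rule sum_distrib_left[symmetric])
      also have "\<dots> = ?c (Suc i - t) * ((real n - real i - real t) * ?S y)"
        using L2[OF Kc yn] by (simp add: i_def)
      finally show ?thesis using True by simp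
    next
      case False
      have "?F (insert a y) = 0" if a: "a \<in> {1..n}-y" for a
      proof -
        have ci: "card (insert a y) = Suc i" using a fy by (simp add: i_def)
        hence "insert a y \<notin> hball n r" using False yr i_def by (auto simp: hball_eq)
        thus ?thesis by (simp add: Phi_def)
      qed
      thus ?thesis using False by simp
    qed
    have lhs: "adj_op n r ?F y = ?c (i - 1 - t) * (real (i - t) * ?S y) + (if i < r then ?c (Suc i - t) * ((real n - real i - real t) * ?S y) else 0)"
      using adj_formula[OF True Phi_funs] s1 s2 by simp
    have rhs: "fscale mu ?F y = mu * (?c (i - t) * ?S y)"
      using True by (simp add: fscale_def Phi_def i_def)
    show ?thesis
    proof (cases "i < t")
      case True
      hence "?S y = 0" using Ssum_small[OF fy] i_def by simp
      thus ?thesis using lhs rhs by simp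
    next
      case False
      define k where "k = i - t"
      have km: "k \<le> r - t" using yr False by (simp add: k_def i_def)
      have pos: "\<And>j. j < r - t \<Longrightarrow> ?N - real j > 0" using rn tr by auto
      have J: "(if k \<ge> 1 then real k * ?c (k-1) else 0) + (if k < r - t then (?N - real k) * ?c (Suc k) else 0)
         = mu * ?c k" by (rule JAC[OF pos root km])
      have e1: "?c (i - 1 - t) * (real (i - t) * ?S y) = (if k \<ge> 1 then real k * ?c (k-1) else 0) * ?S y"
        using False by (cases "k \<ge> 1") (auto simp: k_def)
      have e2: "(if i < r then ?c (Suc i - t) * ((real n - real i - real t) * ?S y) else 0)
          = (if k < r - t then (?N - real k) * ?c (Suc k) else 0) * ?S y"
        using False yr by (auto simp: k_def Suc_diff_le of_nat_diff)
      have "adj_op n r ?F y = ((if k \<ge> 1 then real k * ?c (k-1) else 0) + (if k < r - t then (?N - real k) * ?c (Suc k) else 0)) * ?S y"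
        unfolding lhs e1 e2 by (simp add: algebra_simps)
      also have "\<dots> = mu * ?c k * ?S y" unfolding J ..
      finally show ?thesis unfolding rhs k_def by simp
    qed
  qed
qed


lemma real_n2t: "2 * t \<le> n \<Longrightarrow> real (n - 2 * t) = real n - 2 * real t"
  by (simp add: of_nat_diff)

lemma Lambda_char:
  assumes rn: "2*r \<le> n" and tr: "t \<le> r"
  shows "Lambda n r t = {mu. poly (Qp (real n - 2*real t) (Suc (r - t))) mu = 0}"
proof -
  let ?M = "n - 2 * t"
  let ?k = "Suc (r - t)"
  let ?Q = "Qp (real n - 2*real t) ?k"
  have RM: "real ?M = real n - 2 * real t" using rn tr by (simp add: real_n2t)
  have k: "r - t + 1 = ?k" by simp
  have kr: "krawtchouk ?M ?k x = 0 \<longleftrightarrow> poly ?Q (real n - 2 * real t - 2 * x) = 0" for x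
  proof -
    have "fact ?k * krawtchouk ?M ?k x = poly (Qp (real ?M) ?k) (real ?M - 2*x)" by (rule kraw_Qp)
    moreover have "(fact ?k :: real) \<noteq> 0" by simp
    ultimately show ?thesis unfolding RM by (metis mult_eq_0_iff)
  qed
  have par: "poly ?Q (- mu) = 0 \<longleftrightarrow> poly ?Q mu = 0" for mu
    using Qp_parity[of "real n - 2*real t" ?k mu] by simp
  show ?thesis
  proof (intro equalityI subsetI)
    fix mu assume "mu \<in> Lambda n r t"
    then obtain x where x: "mu = 2 * x - (real n - 2 * real t)" "krawtchouk ?M ?k x = 0"
      unfolding Lambda_def kraw_roots_def k by auto
    have "real n - 2 * real t - 2 * x = - mu" using x(1) by simp
    hence "poly ?Q (- mu) = 0" using kr x(2) by simp
    thus "mu \<in> {mu. poly ?Q mu = 0}" using par by simp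
  next
    fix mu assume "mu \<in> {mu. poly ?Q mu = 0}"
    hence "poly ?Q (- mu) = 0" using par by simp
    define x where "x = (mu + (real n - 2 * real t)) / 2"
    have "real n - 2 * real t - 2 * x = - mu" unfolding x_def by (simp add: field_simps)
    hence "krawtchouk ?M ?k x = 0" using kr \<open>poly ?Q (- mu) = 0\<close> by simp
    moreover have "mu = 2 * x - (real n - 2 * real t)" unfolding x_def by (simp add: field_simps)
    ultimately show "mu \<in> Lambda n r t" unfolding Lambda_def kraw_roots_def k by auto
  qed
qed

lemma card_Lambda:
  assumes rn: "2*r \<le> n" and tr: "t \<le> r"
  shows "card (Lambda n r t) = r - t + 1"
proof -
  have "card {mu. poly (Qp (real n - 2*real t) (Suc (r - t))) mu = 0} = Suc (r - t)"
  proof (rule Qp_card_roots)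
    fix j assume j: "1 \<le> j" "j \<le> r - t"
    have "real n - 2 * real t - real j + 1 > 0" using j rn tr by linarith
    thus "real j * (real n - 2 * real t - real j + 1) > 0" using j by simp
  qed
  thus ?thesis using Lambda_char[OF rn tr] by simp
qed

lemma sphere_layer_eq: "sphere_layer n i = {x. x \<subseteq> {1..n} \<and> card x = i}"
  unfolding sphere_layer_def by simp

lemma finite_layer: "finite (sphere_layer n i)"
  unfolding sphere_layer_def by (rule finite_subset[of _ "Pow {1..n}"]) auto

lemma ORTH:
  assumes Kc: "\<And>w. w \<subseteq> {1..n} \<Longrightarrow> card w + 1 = t' \<Longrightarrow> (\<Sum>a\<in>{1..n}-w. h' (insert a w)) = 0"
    and st: "s < t'"
  shows "(\<Sum>y\<in>sphere_layer n i. Ssum t' h' y * Ssum s g y) = 0"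
proof (induction i)
  case 0
  have "Ssum t' h' y = 0" if "y \<in> sphere_layer n 0" for y
    using that st by (intro Ssum_small) (auto simp: sphere_layer_def intro: finite_subset)
  thus ?case by simp
next
  case (Suc i)
  show ?case
  proof (cases "Suc i < t'")
    case True
    have "Ssum t' h' y = 0" if "y \<in> sphere_layer n (Suc i)" for y
      using that True by (intro Ssum_small) (auto simp: sphere_layer_def intro: finite_subset)
    thus ?thesis by simp
  next
    case False
    let ?I = "\<lambda>j. (\<Sum>y\<in>sphere_layer n j. Ssum t' h' y * Ssum s g y)"
    have "real (Suc i - s) * ?I (Suc i) = (\<Sum>y\<in>sphere_layer n (Suc i). Ssum t' h' y * (real (card y - s) * Ssum s g y))"
      by (simp add: sum_distrib_left sphere_layer_def algebra_simps)
    also have "\<dots> = (\<Sum>y\<in>sphere_layer n (Suc i). Ssum t' h' y * (\<Sum>a\<in>y. Ssum s g (y - {a})))"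
    proof (rule sum.cong[OF refl])
      fix y assume "y \<in> sphere_layer n (Suc i)"
      hence "finite y" by (auto simp: sphere_layer_def intro: finite_subset)
      thus "Ssum t' h' y * (real (card y - s) * Ssum s g y) = Ssum t' h' y * (\<Sum>a\<in>y. Ssum s g (y - {a}))"
        by (simp add: L1)
    qed
    also have "\<dots> = (\<Sum>w\<in>sphere_layer n (Suc i - 1). Ssum s g w * (\<Sum>a\<in>{1..n} - w. Ssum t' h' (insert a w)))"
      by (rule L3) simp
    also have "\<dots> = (\<Sum>w\<in>sphere_layer n i. Ssum s g w * ((real n - real (card w) - real t') * Ssum t' h' w))"
    proof (rule sum.cong)
      fix w assume "w \<in> sphere_layer n i"
      hence wn: "w \<subseteq> {1..n}" by (simp add: sphere_layer_def)
      show "Ssum s g w * (\<Sum>a\<in>{1..n} - w. Ssum t' h' (insert a w)) = Ssum s g w * ((real n - real (card w) - real t') * Ssum t' h' w)"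
        using L2[OF Kc wn] by simp
    qed simp
    also have "\<dots> = (real n - real i - real t') * ?I i"
      by (simp add: sum_distrib_left sphere_layer_def algebra_simps)
    also have "\<dots> = 0" using Suc.IH by simp
    finally have "real (Suc i - s) * ?I (Suc i) = 0" .
    moreover have "real (Suc i - s) \<noteq> 0" using False st by simp
    ultimately show ?thesis by simp
  qed
qed


lemma sum_fun_at: "(\<Sum>i\<in>A. F i) (x::'a) = (\<Sum>i\<in>A. F i x)" for F :: "'b \<Rightarrow> 'a \<Rightarrow> real"
  by (induction A rule: infinite_finite_induct) auto

lemma fscale_at: "fscale c f x = c * f x" by (simp add: fscale_def)

definition lin :: "((nat set \<Rightarrow> real) \<Rightarrow> (nat set \<Rightarrow> real)) \<Rightarrow> bool" where
  "lin f \<longleftrightarrow> (\<forall>x y. f (x + y) = f x + f y) \<and> (\<forall>c x. f (fscale c x) = fscale c (f x))"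

lemma lin_add: "lin f \<Longrightarrow> f (x + y) = f x + f y" unfolding lin_def by blast
lemma lin_scale: "lin f \<Longrightarrow> f (fscale c x) = fscale c (f x)" unfolding lin_def by blast
lemma lin_zero: "lin f \<Longrightarrow> f 0 = 0"
proof -
  assume l: "lin f"
  have "f (fscale 0 0) = fscale 0 (f 0)" by (rule lin_scale[OF l])
  thus ?thesis by (simp add: fscale_def zero_fun_def)
qed
lemma lin_sum: "lin f \<Longrightarrow> f (\<Sum>i\<in>I. g i) = (\<Sum>i\<in>I. f (g i))"
  by (induction I rule: infinite_finite_induct) (auto simp: lin_zero lin_add)
lemma lin_diff: "lin f \<Longrightarrow> f (x - y) = f x - f y"
proof -
  assume l: "lin f"
  have "f (x - y) + f y = f x" using lin_add[OF l, of "x - y" y] by simp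
  thus ?thesis by (simp add: algebra_simps)
qed

lemma fvs_basis:
  assumes "V \<subseteq> fvs.span S" "finite S"
  obtains B where "B \<subseteq> V" "fvs.independent B" "V \<subseteq> fvs.span B" "card B = fvs.dim V" "finite B"
proof -
  obtain B where B: "B \<subseteq> V" "fvs.independent B" "V \<subseteq> fvs.span B" "card B = fvs.dim V"
    by (rule fvs.basis_exists)
  have "finite B" using fvs.independent_span_bound[OF assms(2) B(2)] B(1) assms(1) by auto
  thus ?thesis using B that by blast
qed

lemma card_le_dim':
  assumes "B \<subseteq> V" "fvs.independent B" "V \<subseteq> fvs.span S" "finite S"
  shows "finite B \<and> card B \<le> fvs.dim V"
proof -
  obtain B' where B': "B \<subseteq> B'" "B' \<subseteq> V" "fvs.independent B'" "V \<subseteq> fvs.span B'"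
    using fvs.maximal_independent_subset_extend[OF assms(1,2)] by blast
  have fB': "finite B'" using fvs.independent_span_bound[OF assms(4) B'(3)] B'(2) assms(3) by auto
  have "card B' = fvs.dim V" by (rule fvs.basis_card_eq_dim[OF B'(2,4,3)])
  thus ?thesis using B'(1) fB' card_mono[OF fB' B'(1)] finite_subset[OF B'(1) fB'] by simp
qed

lemma dim_mono':
  assumes "V \<subseteq> W" "W \<subseteq> fvs.span S" "finite S"
  shows "fvs.dim V \<le> fvs.dim W"
proof -
  obtain B where B: "B \<subseteq> W" "fvs.independent B" "W \<subseteq> fvs.span B" "card B = fvs.dim W" "finite B"
    using fvs_basis[OF assms(2,3)] by blast
  have "fvs.dim V \<le> card B" by (rule fvs.dim_le_card) (use assms(1) B in auto)
  thus ?thesis using B by simp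
qed

lemma dim_image_le':
  assumes l: "lin f" and V: "V \<subseteq> fvs.span S" "finite S"
  shows "fvs.dim (f ` V) \<le> fvs.dim V"
proof -
  obtain B where B: "B \<subseteq> V" "fvs.independent B" "V \<subseteq> fvs.span B" "card B = fvs.dim V" "finite B"
    using fvs_basis[OF V] by blast
  have "f ` V \<subseteq> fvs.span (f ` B)"
  proof
    fix z assume "z \<in> f ` V"
    then obtain v where v: "v \<in> V" "z = f v" by blast
    have "v \<in> fvs.span B" using v B by blast
    then obtain u where u: "v = (\<Sum>b\<in>B. fscale (u b) b)" using fvs.span_finite[OF B(5)] by blast
    have "z = (\<Sum>b\<in>B. f (fscale (u b) b))" using v u lin_sum[OF l] by simp
    also have "\<dots> = (\<Sum>b\<in>B. fscale (u b) (f b))" using lin_scale[OF l] by simp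
    also have "\<dots> \<in> fvs.span (f ` B)"
      by (rule fvs.span_sum) (simp add: fvs.span_scale fvs.span_base)
    finally show "z \<in> fvs.span (f ` B)" .
  qed
  hence "fvs.dim (f ` V) \<le> card (f ` B)" using B(5) by (intro fvs.dim_le_card) auto
  also have "\<dots> \<le> card B" using B(5) by (rule card_image_le)
  finally show ?thesis using B by simp
qed

definition dlt :: "nat set \<Rightarrow> (nat set \<Rightarrow> real)" where "dlt z = (\<lambda>x. if x = z then 1 else 0)"

lemma funs_on_span:
  assumes "finite X"
  shows "funs_on X \<subseteq> fvs.span (dlt ` X)"
proof
  fix f assume f: "f \<in> funs_on X"
  have "f = (\<Sum>z\<in>X. fscale (f z) (dlt z))"
  proof (rule ext)
    fix x
    show "f x = (\<Sum>z\<in>X. fscale (f z) (dlt z)) x"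
    proof (cases "x \<in> X")
      case True
      have "(\<Sum>z\<in>X. fscale (f z) (dlt z)) x = (\<Sum>z\<in>X. if z = x then f z else 0)"
        unfolding sum_fun_at by (rule sum.cong) (auto simp: fscale_def dlt_def)
      also have "\<dots> = f x" using True assms by (simp add: sum.delta)
      finally show ?thesis by simp
    next
      case False
      hence "f x = 0" using f by (simp add: funs_on_def)
      moreover have "(\<Sum>z\<in>X. fscale (f z) (dlt z)) x = 0"
        unfolding sum_fun_at using False by (intro sum.neutral) (auto simp: fscale_def dlt_def)
      ultimately show ?thesis by simp
    qed
  qed
  also have "\<dots> \<in> fvs.span (dlt ` X)"
    by (rule fvs.span_sum) (simp add: fvs.span_scale fvs.span_base)
  finally show "f \<in> fvs.span (dlt ` X)" .
qed

lemma funs_on_subspace: "fvs.subspace (funs_on X)"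
  unfolding fvs.subspace_def funs_on_def by (auto simp: fscale_def)

lemma dim_funs_on_le: "finite X \<Longrightarrow> fvs.dim (funs_on X) \<le> card X"
proof -
  assume fX: "finite X"
  have "fvs.dim (funs_on X) \<le> card (dlt ` X)"
    by (rule fvs.dim_le_card[OF funs_on_span[OF fX]]) (use fX in simp)
  also have "\<dots> \<le> card X" using fX by (rule card_image_le)
  finally show ?thesis .
qed

lemma dlt_independent:
  assumes fX: "finite X"
  shows "fvs.independent (dlt ` X) \<and> card (dlt ` X) = card X"
proof
  have inj: "inj_on dlt X" by (rule inj_onI) (metis dlt_def one_neq_zero)
  thus "card (dlt ` X) = card X" by (rule card_image)
  show "fvs.independent (dlt ` X)"
  proof (rule fvs.independent_if_scalars_zero)
    show "finite (dlt ` X)" using fX by simp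
    fix u d assume s: "(\<Sum>x\<in>dlt ` X. fscale (u x) x) = 0" and d: "d \<in> dlt ` X"
    then obtain z where z: "z \<in> X" "d = dlt z" by blast
    have "(\<Sum>x\<in>dlt ` X. fscale (u x) x) z = (\<Sum>w\<in>X. u (dlt w) * dlt w z)"
      unfolding sum_fun_at sum.reindex[OF inj] by (simp add: fscale_def)
    also have "\<dots> = (\<Sum>w\<in>X. if w = z then u (dlt w) else 0)"
      by (rule sum.cong) (auto simp: dlt_def)
    also have "\<dots> = u (dlt z)" using z fX by (simp add: sum.delta')
    finally show "u d = 0" using s z by simp
  qed
qed

lemma dim_funs_on_ge: "finite X \<Longrightarrow> card X \<le> fvs.dim (funs_on X)"
proof -
  assume fX: "finite X"
  have "dlt ` X \<subseteq> funs_on X" by (auto simp: funs_on_def dlt_def)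
  thus ?thesis using card_le_dim'[of "dlt ` X" "funs_on X" "dlt ` X"] dlt_independent[OF fX] funs_on_span[OF fX] fX
    by auto
qed


lemma binner_sym: "binner n r f g = binner n r g f"
  unfolding binner_def by (simp add: mult.commute)

lemma binner_add2: "binner n r f (g1 + g2) = binner n r f g1 + binner n r f g2"
  unfolding binner_def by (simp add: algebra_simps sum.distrib)

lemma binner_scale2: "binner n r f (fscale c g) = c * binner n r f g"
  unfolding binner_def by (simp add: fscale_def sum_distrib_left algebra_simps)

lemma binner_zero2: "binner n r f 0 = 0"
  unfolding binner_def by simp

lemma binner_self_zero:
  assumes "x \<in> funs_on (hball n r)" "binner n r x x = 0"
  shows "x = 0"
proof (rule ext)
  fix y
  have "\<forall>z\<in>hball n r. x z * x z = 0"
    using assms(2) finite_hball[of n r] unfolding binner_def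
    by (subst (asm) sum_nonneg_eq_0_iff) auto
  thus "x y = 0 y" using assms(1) by (cases "y \<in> hball n r") (auto simp: funs_on_def)
qed

lemma orth_span:
  assumes "\<And>y. y \<in> S \<Longrightarrow> binner n r x y = 0" "z \<in> fvs.span S"
  shows "binner n r x z = 0"
proof -
  have sub: "fvs.subspace {z. binner n r x z = 0}"
    unfolding fvs.subspace_def by (simp add: binner_add2 binner_scale2 binner_zero2)
  show ?thesis using fvs.span_induct[OF assms(2), of "\<lambda>z. binner n r x z = 0"] sub assms(1) by blast
qed

lemma span_Un_span: "fvs.span (A \<union> fvs.span B) = fvs.span (A \<union> B)"
proof (rule antisym)
  show "fvs.span (A \<union> fvs.span B) \<subseteq> fvs.span (A \<union> B)"
    by (rule fvs.span_minimal) (auto intro: fvs.span_base fvs.span_mono[THEN subsetD, of B "A \<union> B"])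
  show "fvs.span (A \<union> B) \<subseteq> fvs.span (A \<union> fvs.span B)"
    by (rule fvs.span_mono) (auto intro: fvs.span_base)
qed

lemma orth_pair:
  assumes X: "X \<subseteq> funs_on (hball n r)" "fvs.subspace X"
    and Y: "Y \<subseteq> funs_on (hball n r)" "fvs.subspace Y"
    and o: "\<And>x y. x \<in> X \<Longrightarrow> y \<in> Y \<Longrightarrow> binner n r x y = 0"
  shows "fvs.dim X + fvs.dim Y \<le> fvs.dim (fvs.span (X \<union> Y))"
proof -
  let ?S = "dlt ` hball n r"
  have fS: "finite ?S" using finite_hball by simp
  have FS: "funs_on (hball n r) \<subseteq> fvs.span ?S" by (rule funs_on_span[OF finite_hball])
  obtain BX where BX: "BX \<subseteq> X" "fvs.independent BX" "X \<subseteq> fvs.span BX" "card BX = fvs.dim X" "finite BX"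
    using fvs_basis[of X ?S] X FS fS by blast
  obtain BY where BY: "BY \<subseteq> Y" "fvs.independent BY" "Y \<subseteq> fvs.span BY" "card BY = fvs.dim Y" "finite BY"
    using fvs_basis[of Y ?S] Y FS fS by blast
  have XY0: "v = 0" if "v \<in> X" "v \<in> Y" for v
    using binner_self_zero[of v n r] o[OF that] that X by auto
  have disj: "BX \<inter> BY = {}"
  proof (rule ccontr)
    assume "BX \<inter> BY \<noteq> {}"
    then obtain v where "v \<in> BX" "v \<in> BY" by blast
    hence "v = 0" using XY0 BX BY by blast
    thus False using \<open>v \<in> BX\<close> BX(2) fvs.dependent_zero by blast
  qed
  have spX: "fvs.span BX \<subseteq> X" using BX(1) X(2) by (simp add: fvs.span_minimal)
  have spY: "fvs.span BY \<subseteq> Y" using BY(1) Y(2) by (simp add: fvs.span_minimal)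
  have ind: "fvs.independent (BX \<union> BY)"
  proof (rule fvs.independent_if_scalars_zero)
    show "finite (BX \<union> BY)" using BX BY by simp
    fix u v assume s: "(\<Sum>x\<in>BX \<union> BY. fscale (u x) x) = 0" and v: "v \<in> BX \<union> BY"
    let ?sx = "\<Sum>x\<in>BX. fscale (u x) x"
    let ?sy = "\<Sum>x\<in>BY. fscale (u x) x"
    have "?sx + ?sy = 0" using s disj BX(5) BY(5) by (simp add: sum.union_disjoint)
    hence e: "?sx = - ?sy" by (simp add: eq_neg_iff_add_eq_0)
    have "?sx \<in> fvs.span BX" by (rule fvs.span_sum) (simp add: fvs.span_scale fvs.span_base)
    hence sx: "?sx \<in> X" using spX by blast
    have "?sy \<in> fvs.span BY" by (rule fvs.span_sum) (simp add: fvs.span_scale fvs.span_base)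
    hence sy: "?sy \<in> Y" using spY by blast
    have "- ?sy \<in> Y" using fvs.subspace_neg[OF Y(2) sy] .
    hence "?sx = 0" using XY0[OF sx] e by simp
    hence "?sy = 0" using e by simp
    show "u v = 0"
    proof (cases "v \<in> BX")
      case True thus ?thesis using fvs.independentD[OF BX(2) BX(5) subset_refl \<open>?sx = 0\<close>] by blast
    next
      case False hence "v \<in> BY" using v by blast
      thus ?thesis using fvs.independentD[OF BY(2) BY(5) subset_refl \<open>?sy = 0\<close>] by blast
    qed
  qed
  have sub: "BX \<union> BY \<subseteq> fvs.span (X \<union> Y)" using BX(1) BY(1) by (auto intro: fvs.span_base)
  have sp: "fvs.span (X \<union> Y) \<subseteq> fvs.span ?S"
    by (rule fvs.span_minimal) (use X(1) Y(1) FS in auto)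
  have "card (BX \<union> BY) \<le> fvs.dim (fvs.span (X \<union> Y))"
    using card_le_dim'[OF sub ind sp fS] by simp
  thus ?thesis using BX BY disj by (simp add: card_Un_disjoint)
qed

lemma orth_family:
  assumes "finite I"
    and sub: "\<And>i. i \<in> I \<Longrightarrow> X i \<subseteq> funs_on (hball n r) \<and> fvs.subspace (X i)"
    and o: "\<And>i j x y. i \<in> I \<Longrightarrow> j \<in> I \<Longrightarrow> i \<noteq> j \<Longrightarrow> x \<in> X i \<Longrightarrow> y \<in> X j \<Longrightarrow> binner n r x y = 0"
  shows "(\<Sum>i\<in>I. fvs.dim (X i)) \<le> fvs.dim (fvs.span (\<Union>i\<in>I. X i))"
  using assms
proof (induction I rule: finite_induct)
  case empty thus ?case by simp
next
  case (insert j I)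
  let ?Y = "fvs.span (\<Union>i\<in>I. X i)"
  have IH: "(\<Sum>i\<in>I. fvs.dim (X i)) \<le> fvs.dim ?Y"
    using insert.IH insert.prems by blast
  have Xj: "X j \<subseteq> funs_on (hball n r)" "fvs.subspace (X j)" using insert.prems by auto
  have Ysub: "?Y \<subseteq> funs_on (hball n r)"
    by (rule fvs.span_minimal) (use insert.prems funs_on_subspace in auto)
  have oj: "binner n r x y = 0" if "x \<in> X j" "y \<in> ?Y" for x y
  proof (rule orth_span[OF _ that(2)])
    fix z assume "z \<in> (\<Union>i\<in>I. X i)"
    then obtain i where "i \<in> I" "z \<in> X i" by blast
    thus "binner n r x z = 0" using insert.prems(2)[of j i x z] that(1) insert.hyps(2) by auto
  qed
  have "fvs.dim (X j) + fvs.dim ?Y \<le> fvs.dim (fvs.span (X j \<union> ?Y))"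
    by (rule orth_pair[OF Xj Ysub]) (auto intro: oj)
  also have "fvs.span (X j \<union> ?Y) = fvs.span (\<Union>i\<in>insert j I. X i)"
    unfolding span_Un_span by simp
  finally show ?case using IH insert.hyps by simp
qed


lemma Ssum_add: "Ssum t (h1 + h2) y = Ssum t h1 y + Ssum t h2 y"
  unfolding Ssum_def by (simp add: sum.distrib)

lemma Ssum_scale: "Ssum t (fscale c h) y = c * Ssum t h y"
  unfolding Ssum_def by (simp add: fscale_def sum_distrib_left)

lemma Ssum_scale': "Ssum t (\<lambda>x. c * h x) y = c * Ssum t h y"
  unfolding Ssum_def by (simp add: sum_distrib_left)

lemma Ssum_self: "finite y \<Longrightarrow> Ssum (card y) h y = h y"
proof -
  assume fy: "finite y"
  have "{x. x \<subseteq> y \<and> card x = card y} = {y}"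
    using fy card_subset_eq[OF fy] by auto
  thus ?thesis unfolding Ssum_def by simp
qed

lemma Phi_lin: "lin (Phi n r t mu)"
  unfolding lin_def Phi_def by (auto simp: fun_eq_iff Ssum_add Ssum_scale' fscale_def algebra_simps)

lemma Kt_subspace: "fvs.subspace (Kt n t)"
  unfolding fvs.subspace_def Kt_def funs_on_def
  by (auto simp: fscale_def sum.distrib sum_distrib_left[symmetric])

lemma Kt_funs: "Kt n t \<subseteq> funs_on (sphere_layer n t)"
  unfolding Kt_def by auto

lemma image_subspace: "lin f \<Longrightarrow> fvs.subspace V \<Longrightarrow> fvs.subspace (f ` V)"
proof -
  assume l: "lin f" and V: "fvs.subspace V"
  show ?thesis unfolding fvs.subspace_def
  proof (intro conjI ballI allI)
    show "0 \<in> f ` V" using lin_zero[OF l] fvs.subspace_0[OF V] by force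
    fix x y assume "x \<in> f ` V" "y \<in> f ` V"
    then obtain a b where "a \<in> V" "b \<in> V" "x = f a" "y = f b" by blast
    thus "x + y \<in> f ` V" using lin_add[OF l, of a b] fvs.subspace_add[OF V] by (metis image_eqI)
  next
    fix c x assume "x \<in> f ` V"
    then obtain a where "a \<in> V" "x = f a" by blast
    thus "fscale c x \<in> f ` V" using lin_scale[OF l, of c a] fvs.subspace_scale[OF V] by (metis image_eqI)
  qed
qed

lemma restr_Phi:
  assumes tr: "t \<le> r" and h: "h \<in> Kt n t"
  shows "restr (sphere_layer n t) (Phi n r t mu h) = h"
proof (rule ext)
  fix y
  show "restr (sphere_layer n t) (Phi n r t mu h) y = h y"
  proof (cases "y \<in> sphere_layer n t")
    case True
    hence yn: "y \<subseteq> {1..n}" "card y = t" by (auto simp: sphere_layer_def)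
    have "y \<in> hball n r" using yn tr by (auto simp: hball_eq)
    moreover have "Ssum t h y = h y" using Ssum_self[OF finite_sub_n[OF yn(1)]] yn(2) by simp
    ultimately show ?thesis using True yn by (simp add: restr_def Phi_def cc_0)
  next
    case False thus ?thesis using h by (auto simp: restr_def Kt_def funs_on_def)
  qed
qed

lemma restr_lin: "lin (restr X)"
  unfolding lin_def restr_def by (auto simp: fun_eq_iff fscale_def)

lemma binner_layers:
  "binner n r f g = (\<Sum>i\<in>{0..r}. \<Sum>y\<in>sphere_layer n i. f y * g y)"
  unfolding binner_def hball_def
  by (rule sum.UNION_disjoint) (auto simp: finite_layer sphere_layer_def)

lemma Phi_orth_lt:
  assumes tt: "t < t'" and h: "h \<in> Kt n t" and h': "h' \<in> Kt n t'"
  shows "binner n r (Phi n r t mu h) (Phi n r t' mu' h') = 0"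
proof -
  have Kc: "\<And>w. w \<subseteq> {1..n} \<Longrightarrow> card w + 1 = t' \<Longrightarrow> (\<Sum>a\<in>{1..n}-w. h' (insert a w)) = 0"
    using h' unfolding Kt_def by blast
  have "(\<Sum>y\<in>sphere_layer n i. Phi n r t mu h y * Phi n r t' mu' h' y) = 0" if i: "i \<in> {0..r}" for i
  proof -
    let ?c = "cc (real n - 2 * real t) mu (i - t) * cc (real n - 2 * real t') mu' (i - t')"
    have "(\<Sum>y\<in>sphere_layer n i. Phi n r t mu h y * Phi n r t' mu' h' y)
        = (\<Sum>y\<in>sphere_layer n i. ?c * (Ssum t' h' y * Ssum t h y))"
    proof (rule sum.cong[OF refl])
      fix y assume "y \<in> sphere_layer n i"
      hence "y \<in> hball n r" "card y = i" using i unfolding hball_def by (auto simp: sphere_layer_def)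
      thus "Phi n r t mu h y * Phi n r t' mu' h' y = ?c * (Ssum t' h' y * Ssum t h y)"
        by (simp add: Phi_def)
    qed
    also have "\<dots> = ?c * (\<Sum>y\<in>sphere_layer n i. Ssum t' h' y * Ssum t h y)"
      by (simp add: sum_distrib_left)
    also have "(\<Sum>y\<in>sphere_layer n i. Ssum t' h' y * Ssum t h y) = 0"
      by (rule ORTH[OF Kc tt])
    finally show ?thesis by simp
  qed
  thus ?thesis unfolding binner_layers by simp
qed

lemma Phi_orth:
  assumes tt: "t \<noteq> t'" and h: "h \<in> Kt n t" and h': "h' \<in> Kt n t'"
  shows "binner n r (Phi n r t mu h) (Phi n r t' mu' h') = 0"
proof (cases "t < t'")
  case True thus ?thesis using Phi_orth_lt[OF True h h'] by simp
next
  case False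
  hence "t' < t" using tt by simp
  thus ?thesis using Phi_orth_lt[OF _ h' h] binner_sym by metis
qed

lemma eigen_orth:
  assumes "f \<in> adj_eigenspace n r mu" "g \<in> adj_eigenspace n r nu" "mu \<noteq> nu"
  shows "binner n r f g = 0"
proof -
  have af: "adj_op n r f = fscale mu f" and ag: "adj_op n r g = fscale nu g"
    using assms by (auto simp: adj_eigenspace_def)
  have "mu * binner n r f g = binner n r (adj_op n r f) g"
    unfolding af by (simp add: binner_def fscale_def sum_distrib_left algebra_simps)
  also have "\<dots> = binner n r f (adj_op n r g)" by (rule adj_selfadj)
  also have "\<dots> = nu * binner n r f g" unfolding ag by (simp add: binner_scale2)
  finally show ?thesis using assms(3) by simp
qed

lemma eigenspace_subspace: "fvs.subspace (adj_eigenspace n r mu)"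
proof -
  have l: "lin (adj_op n r)"
    unfolding lin_def adj_op_def by (auto simp: fun_eq_iff fscale_def sum.distrib sum_distrib_left)
  show ?thesis
    unfolding fvs.subspace_def adj_eigenspace_def
  proof (intro conjI ballI allI)
    show "0 \<in> {f \<in> funs_on (hball n r). adj_op n r f = fscale mu f}"
      using lin_zero[OF l] by (simp add: funs_on_def fscale_def zero_fun_def)
  next
    fix x y assume x: "x \<in> {f \<in> funs_on (hball n r). adj_op n r f = fscale mu f}"
      and y: "y \<in> {f \<in> funs_on (hball n r). adj_op n r f = fscale mu f}"
    thus "x + y \<in> {f \<in> funs_on (hball n r). adj_op n r f = fscale mu f}"
      using lin_add[OF l, of x y] by (auto simp: funs_on_def fscale_def fun_eq_iff algebra_simps)
  next
    fix c x assume x: "x \<in> {f \<in> funs_on (hball n r). adj_op n r f = fscale mu f}"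
    thus "fscale c x \<in> {f \<in> funs_on (hball n r). adj_op n r f = fscale mu f}"
      using lin_scale[OF l, of c x] by (auto simp: funs_on_def fscale_def fun_eq_iff algebra_simps)
  qed
qed


lemma rank_ineq:
  assumes l: "lin D" and F: "fvs.subspace F" "F \<subseteq> fvs.span S" "finite S"
    and DF: "D ` F \<subseteq> fvs.span S'" "finite S'"
  shows "fvs.dim F \<le> fvs.dim {h\<in>F. D h = 0} + fvs.dim (D ` F)"
proof -
  let ?K = "{h\<in>F. D h = 0}"
  obtain BK where BK: "BK \<subseteq> ?K" "fvs.independent BK" "?K \<subseteq> fvs.span BK" "card BK = fvs.dim ?K" "finite BK"
    using fvs_basis[of ?K S] F by blast
  obtain C where C: "C \<subseteq> D ` F" "fvs.independent C" "D ` F \<subseteq> fvs.span C" "card C = fvs.dim (D ` F)" "finite C"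
    using fvs_basis[OF DF] by blast
  define pre where "pre = inv_into F D"
  have pre: "pre c \<in> F" "D (pre c) = c" if "c \<in> C" for c
  proof -
    have c: "c \<in> D ` F" using that C(1) by blast
    show "pre c \<in> F" unfolding pre_def using c by (rule inv_into_into)
    show "D (pre c) = c" unfolding pre_def using c by (rule f_inv_into_f)
  qed
  have "F \<subseteq> fvs.span (BK \<union> pre ` C)"
  proof
    fix v assume v: "v \<in> F"
    have "D v \<in> fvs.span C" using v C(3) by blast
    then obtain u where u: "D v = (\<Sum>c\<in>C. fscale (u c) c)" using fvs.span_finite[OF C(5)] by blast
    define w where "w = (\<Sum>c\<in>C. fscale (u c) (pre c))"
    have wF: "w \<in> F" unfolding w_def
      by (rule fvs.subspace_sum[OF F(1)]) (simp add: fvs.subspace_scale[OF F(1)] pre)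
    have "D w = (\<Sum>c\<in>C. D (fscale (u c) (pre c)))" unfolding w_def by (rule lin_sum[OF l])
    also have "\<dots> = (\<Sum>c\<in>C. fscale (u c) c)" by (rule sum.cong) (simp_all add: lin_scale[OF l] pre)
    finally have Dw: "D w = D v" using u by simp
    have "v - w \<in> ?K" using fvs.subspace_diff[OF F(1) v wF] lin_diff[OF l, of v w] Dw by simp
    hence "v - w \<in> fvs.span (BK \<union> pre ` C)" using BK(3) fvs.span_mono[of BK "BK \<union> pre ` C"] by blast
    moreover have "w \<in> fvs.span (BK \<union> pre ` C)" unfolding w_def
      by (rule fvs.span_sum) (simp add: fvs.span_scale fvs.span_base)
    ultimately have "(v - w) + w \<in> fvs.span (BK \<union> pre ` C)" by (rule fvs.span_add)
    thus "v \<in> fvs.span (BK \<union> pre ` C)" by simp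
  qed
  hence "fvs.dim F \<le> card (BK \<union> pre ` C)" using BK(5) C(5) by (intro fvs.dim_le_card) auto
  also have "\<dots> \<le> card BK + card (pre ` C)" by (rule card_Un_le)
  also have "card (pre ` C) \<le> card C" using C(5) by (rule card_image_le)
  finally show ?thesis using BK(4) C(4) by simp
qed

lemma card_layer: "card (sphere_layer n i) = n choose i"
  unfolding sphere_layer_eq using n_subsets[of "{1..n}" i] by simp

definition Dn :: "nat \<Rightarrow> nat \<Rightarrow> (nat set \<Rightarrow> real) \<Rightarrow> (nat set \<Rightarrow> real)" where
  "Dn n t h = (\<lambda>w. if w \<subseteq> {1..n} \<and> card w + 1 = t then (\<Sum>a\<in>{1..n}-w. h (insert a w)) else 0)"

lemma Dn_lin: "lin (Dn n t)"
  unfolding lin_def Dn_def by (auto simp: fun_eq_iff fscale_def sum.distrib sum_distrib_left)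

lemma Kt_Dn: "Kt n t = {h \<in> funs_on (sphere_layer n t). Dn n t h = 0}"
  unfolding Kt_def Dn_def by (auto simp: fun_eq_iff)

lemma dim_Kt_ge:
  shows "bdiff n t \<le> int (fvs.dim (Kt n t))"
proof (cases t)
  case 0
  have "Kt n 0 = funs_on (sphere_layer n 0)" unfolding Kt_def by auto
  moreover have "card (sphere_layer n 0) \<le> fvs.dim (funs_on (sphere_layer n 0))"
    by (rule dim_funs_on_ge[OF finite_layer])
  ultimately show ?thesis using 0 card_layer[of n 0] by (simp add: bdiff_def)
next
  case (Suc k)
  let ?F = "funs_on (sphere_layer n t)"
  let ?G = "funs_on (sphere_layer n k)"
  have DF: "Dn n t ` ?F \<subseteq> ?G"
  proof
    fix g assume "g \<in> Dn n t ` ?F"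
    then obtain h where g: "g = Dn n t h" by blast
    show "g \<in> ?G" unfolding funs_on_def
    proof (intro CollectI allI impI)
      fix x assume "x \<notin> sphere_layer n k"
      hence "\<not> (x \<subseteq> {1..n} \<and> card x + 1 = t)" using Suc by (auto simp: sphere_layer_def)
      thus "g x = 0" unfolding g Dn_def by auto
    qed
  qed
  have r: "fvs.dim ?F \<le> fvs.dim (Kt n t) + fvs.dim (Dn n t ` ?F)"
    unfolding Kt_Dn
    by (rule rank_ineq[OF Dn_lin funs_on_subspace funs_on_span[OF finite_layer] _
          subset_trans[OF DF funs_on_span[OF finite_layer]]]) (simp_all add: finite_layer)
  have "fvs.dim (Dn n t ` ?F) \<le> fvs.dim ?G"
    by (rule dim_mono'[OF DF funs_on_span[OF finite_layer]]) (simp add: finite_layer)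
  also have "\<dots> \<le> card (sphere_layer n k)" by (rule dim_funs_on_le[OF finite_layer])
  finally have d1: "fvs.dim (Dn n t ` ?F) \<le> n choose k" using card_layer by simp
  have d2: "n choose t \<le> fvs.dim ?F" using dim_funs_on_ge[OF finite_layer, of n t] card_layer by simp
  show ?thesis using r d1 d2 Suc by (simp add: bdiff_def)
qed

lemma card_hball: "card (hball n r) = (\<Sum>i\<in>{0..r}. n choose i)"
proof -
  have "card (hball n r) = (\<Sum>i\<in>{0..r}. card (sphere_layer n i))"
    unfolding hball_def by (rule card_UN_disjoint) (auto simp: finite_layer sphere_layer_def)
  thus ?thesis by (simp add: card_layer)
qed

lemma tele1: "(\<Sum>t\<in>{0..r}. bdiff n t) = int (n choose r)"
  by (induction r) (auto simp: bdiff_def)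

lemma tele2: "(\<Sum>t\<in>{0..r}. int (r - t + 1) * bdiff n t) = (\<Sum>i\<in>{0..r}. int (n choose i))"
proof (induction r)
  case 0 thus ?case by (simp add: bdiff_def)
next
  case (Suc r)
  have "(\<Sum>t\<in>{0..Suc r}. int (Suc r - t + 1) * bdiff n t)
      = (\<Sum>t\<in>{0..r}. int (Suc r - t + 1) * bdiff n t) + bdiff n (Suc r)"
    by simp
  also have "(\<Sum>t\<in>{0..r}. int (Suc r - t + 1) * bdiff n t) = (\<Sum>t\<in>{0..r}. int (r - t + 1) * bdiff n t + bdiff n t)"
    by (rule sum.cong) (auto simp: Suc_diff_le algebra_simps)
  also have "\<dots> = (\<Sum>t\<in>{0..r}. int (r - t + 1) * bdiff n t) + (\<Sum>t\<in>{0..r}. bdiff n t)"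
    by (rule sum.distrib)
  also have "\<dots> = (\<Sum>i\<in>{0..r}. int (n choose i)) + int (n choose r)"
    unfolding Suc.IH tele1 ..
  finally show ?case by (simp add: bdiff_def)
qed

lemma bdiff_pos:
  assumes "2 * t \<le> n"
  shows "bdiff n t > 0"
proof (cases t)
  case 0 thus ?thesis by (simp add: bdiff_def)
next
  case (Suc k)
  have e: "Suc k * (n choose Suc k) = (n - k) * (n choose k)"
    using binomial_absorption[of k n] binomial_absorb_comp[of n k] by simp
  have pos: "n choose k > 0" using assms Suc by simp
  have "Suc k < n - k" using assms Suc by simp
  hence "Suc k * (n choose k) < (n - k) * (n choose k)" using pos by (rule mult_less_mono1)
  hence "Suc k * (n choose k) < Suc k * (n choose Suc k)" using e by simp
  hence "n choose k < n choose Suc k" using mult_less_cancel1 by blast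
  thus ?thesis using Suc by (simp add: bdiff_def)
qed


definition Sl :: "nat \<Rightarrow> nat \<Rightarrow> nat \<Rightarrow> (nat set \<Rightarrow> real) \<Rightarrow> (nat set \<Rightarrow> real)" where
  "Sl n t i h = (\<lambda>y. if y \<in> sphere_layer n i then Ssum t h y else 0)"

lemma gz_funs: "gz n i z \<in> funs_on (sphere_layer n i)"
  unfolding gz_def funs_on_def by auto

lemma U_sp_funs: "U_sp n i j \<subseteq> funs_on (sphere_layer n i)"
  unfolding U_sp_def by (rule fvs.span_minimal) (auto simp: gz_funs funs_on_subspace)

lemma Sl_U: "Sl n t i h \<in> U_sp n i t"
proof -
  have eq: "Sl n t i h = (\<Sum>x\<in>sphere_layer n t. fscale (h x) (gz n i x))"
  proof (rule ext)
    fix y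
    show "Sl n t i h y = (\<Sum>x\<in>sphere_layer n t. fscale (h x) (gz n i x)) y"
    proof (cases "y \<in> sphere_layer n i")
      case True
      hence yn: "y \<subseteq> {1..n}" by (simp add: sphere_layer_def)
      have "(\<Sum>x\<in>sphere_layer n t. fscale (h x) (gz n i x)) y = (\<Sum>x\<in>sphere_layer n t. if x \<subseteq> y then h x else 0)"
        unfolding sum_fun_at by (rule sum.cong) (auto simp: fscale_def gz_def True)
      also have "\<dots> = sum h {x\<in>sphere_layer n t. x \<subseteq> y}"
        by (rule sum.inter_filter[OF finite_layer, symmetric])
      also have "{x\<in>sphere_layer n t. x \<subseteq> y} = {x. x \<subseteq> y \<and> card x = t}"
        using yn by (auto simp: sphere_layer_def)
      finally show ?thesis using True by (simp add: Sl_def Ssum_def)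
    next
      case False
      have "(\<Sum>x\<in>sphere_layer n t. fscale (h x) (gz n i x)) y = 0"
        unfolding sum_fun_at by (rule sum.neutral) (auto simp: fscale_def gz_def False)
      thus ?thesis using False by (simp add: Sl_def)
    qed
  qed
  show ?thesis unfolding eq U_sp_def
    by (rule fvs.span_sum, rule fvs.span_scale, rule fvs.span_base) (auto simp: sphere_layer_def)
qed

lemma gz_Sl:
  assumes "z \<subseteq> {1..n}"
  shows "gz n i z = Sl n (card z) i (dlt z)"
proof (rule ext)
  fix y
  show "gz n i z y = Sl n (card z) i (dlt z) y"
  proof (cases "y \<in> sphere_layer n i")
    case True
    hence fy: "finite y" by (auto simp: sphere_layer_def intro: finite_subset)
    have "Ssum (card z) (dlt z) y = (\<Sum>x\<in>{x. x \<subseteq> y \<and> card x = card z}. if x = z then 1 else 0)"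
      unfolding Ssum_def dlt_def ..
    also have "\<dots> = (if z \<in> {x. x \<subseteq> y \<and> card x = card z} then 1 else 0)"
      by (rule sum.delta[OF finite_subsets_card[OF fy]])
    finally show ?thesis using True by (simp add: gz_def Sl_def)
  next
    case False thus ?thesis by (simp add: gz_def Sl_def)
  qed
qed

lemma layer_inner_Sl:
  "layer_inner n i (Sl n t i h) (Sl n s i g) = (\<Sum>y\<in>sphere_layer n i. Ssum t h y * Ssum s g y)"
  unfolding layer_inner_def Sl_def by simp

lemma layer_inner_sub: "fvs.subspace {g. layer_inner n i f g = 0}"
  unfolding fvs.subspace_def layer_inner_def
  by (auto simp: fscale_def sum.distrib algebra_simps sum_distrib_left[symmetric])

lemma Sl_orth:
  assumes h: "h \<in> Kt n t" and t: "t \<ge> 1" and g: "g \<in> U_sp n i (t - 1)"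
  shows "layer_inner n i (Sl n t i h) g = 0"
proof -
  have Kc: "\<And>w. w \<subseteq> {1..n} \<Longrightarrow> card w + 1 = t \<Longrightarrow> (\<Sum>a\<in>{1..n}-w. h (insert a w)) = 0"
    using h unfolding Kt_def by blast
  have gen: "layer_inner n i (Sl n t i h) g' = 0" if g'in: "g' \<in> {gz n i z |z. z \<subseteq> {1..n} \<and> card z \<le> t - 1}" for g'
  proof -
    obtain z where z: "g' = gz n i z" "z \<subseteq> {1..n}" "card z \<le> t - 1" using g'in by blast
    have "layer_inner n i (Sl n t i h) g' = (\<Sum>y\<in>sphere_layer n i. Ssum t h y * Ssum (card z) (dlt z) y)"
      unfolding z(1) gz_Sl[OF z(2)] layer_inner_Sl ..
    also have "\<dots> = 0" by (rule ORTH[OF Kc]) (use z t in auto)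
    finally show ?thesis .
  qed
  show ?thesis
    using fvs.span_induct[OF g[unfolded U_sp_def], of "\<lambda>g. layer_inner n i (Sl n t i h) g = 0"]
      layer_inner_sub gen by blast
qed

lemma V_sp_scale:
  assumes "f \<in> V_sp n i t"
  shows "fscale c f \<in> V_sp n i t"
proof (cases "t = 0")
  case True thus ?thesis using assms unfolding V_sp_def U_sp_def by (simp add: fvs.span_scale)
next
  case False
  have "layer_inner n i (fscale c f) g = c * layer_inner n i f g" for g
    unfolding layer_inner_def by (simp add: fscale_def sum_distrib_left algebra_simps)
  thus ?thesis using assms False unfolding V_sp_def U_sp_def by (simp add: fvs.span_scale)
qed

lemma Sl_V: "h \<in> Kt n t \<Longrightarrow> Sl n t i h \<in> V_sp n i t"
proof -
  assume h: "h \<in> Kt n t"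
  show ?thesis
  proof (cases "t = 0")
    case True thus ?thesis using Sl_U[of n t i h] by (simp add: V_sp_def)
  next
    case False
    thus ?thesis using Sl_U[of n t i h] Sl_orth[OF h] by (simp add: V_sp_def)
  qed
qed

lemma Sl_self: "h \<in> Kt n t \<Longrightarrow> Sl n t t h = h"
proof (rule ext)
  fix y assume h: "h \<in> Kt n t"
  show "Sl n t t h y = h y"
  proof (cases "y \<in> sphere_layer n t")
    case True
    hence "finite y" "card y = t" by (auto simp: sphere_layer_def intro: finite_subset)
    thus ?thesis using True Ssum_self[of y h] by (simp add: Sl_def)
  next
    case False thus ?thesis using h by (auto simp: Sl_def Kt_def funs_on_def)
  qed
qed

lemma upper_set:
  assumes w: "w \<subseteq> {1..n}" "card w + 1 = t"
  shows "{y \<in> sphere_layer n t. w \<subseteq> y} = (\<lambda>a. insert a w) ` ({1..n} - w)"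
proof (intro equalityI subsetI)
  have fw: "finite w" using finite_sub_n[OF w(1)] .
  fix y assume y: "y \<in> {y \<in> sphere_layer n t. w \<subseteq> y}"
  hence yn: "y \<subseteq> {1..n}" "card y = t" "w \<subseteq> y" by (auto simp: sphere_layer_def)
  have fy: "finite y" using finite_sub_n[OF yn(1)] .
  have "card (y - w) = 1" using yn w fw by (simp add: card_Diff_subset)
  then obtain a where a: "y - w = {a}" by (auto simp: card_1_singleton_iff)
  have "y = insert a w" using a yn(3) by blast
  moreover have "a \<in> {1..n} - w" using a yn(1) by blast
  ultimately show "y \<in> (\<lambda>a. insert a w) ` ({1..n} - w)" by blast
next
  have fw: "finite w" using finite_sub_n[OF w(1)] .
  fix y assume "y \<in> (\<lambda>a. insert a w) ` ({1..n} - w)"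
  then obtain a where a: "a \<in> {1..n}" "a \<notin> w" "y = insert a w" by blast
  thus "y \<in> {y \<in> sphere_layer n t. w \<subseteq> y}" using w fw by (auto simp: sphere_layer_def)
qed

lemma Kt_V: "Kt n t = V_sp n t t"
proof (intro equalityI subsetI)
  fix h assume h: "h \<in> Kt n t"
  show "h \<in> V_sp n t t" using Sl_V[OF h, of t] Sl_self[OF h] by simp
next
  fix f assume f: "f \<in> V_sp n t t"
  have fU: "f \<in> U_sp n t t" using f by (cases "t = 0") (auto simp: V_sp_def)
  hence ff: "f \<in> funs_on (sphere_layer n t)" using U_sp_funs by blast
  show "f \<in> Kt n t"
  proof (cases "t = 0")
    case True thus ?thesis using ff by (simp add: Kt_def)
  next
    case False
    have orth: "\<forall>g\<in>U_sp n t (t - 1). layer_inner n t f g = 0" using f False by (simp add: V_sp_def)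
    have "(\<Sum>a\<in>{1..n}-w. f (insert a w)) = 0" if w: "w \<subseteq> {1..n}" "card w + 1 = t" for w
    proof -
      have "gz n t w \<in> U_sp n t (t - 1)" unfolding U_sp_def
        by (rule fvs.span_base) (use w in auto)
      hence "layer_inner n t f (gz n t w) = 0" using orth by blast
      moreover have "layer_inner n t f (gz n t w) = sum f {y \<in> sphere_layer n t. w \<subseteq> y}"
        unfolding layer_inner_def gz_def
        by (simp add: sum.inter_filter[OF finite_layer] if_distrib cong: if_cong)
      moreover have "sum f {y \<in> sphere_layer n t. w \<subseteq> y} = (\<Sum>a\<in>{1..n}-w. f (insert a w))"
      proof -
        have inj: "inj_on (\<lambda>a. insert a w) ({1..n} - w)"
          by (rule inj_onI) (metis DiffD2 insertE insertI1)
        show ?thesis unfolding upper_set[OF w] sum.reindex[OF inj] by simp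
      qed
      ultimately show ?thesis by simp
    qed
    thus ?thesis using ff by (simp add: Kt_def)
  qed
qed


lemma restr_layer_Phi:
  assumes "t \<le> i" "i \<le> r"
  shows "restr (sphere_layer n i) (Phi n r t mu h) = fscale (cc (real n - 2 * real t) mu (i - t)) (Sl n t i h)"
proof (rule ext)
  fix y
  show "restr (sphere_layer n i) (Phi n r t mu h) y = fscale (cc (real n - 2 * real t) mu (i - t)) (Sl n t i h) y"
  proof (cases "y \<in> sphere_layer n i")
    case True
    hence "y \<in> hball n r" "card y = i" using assms unfolding hball_def by (auto simp: sphere_layer_def)
    thus ?thesis using True by (simp add: restr_def Phi_def Sl_def fscale_def)
  next
    case False thus ?thesis by (simp add: restr_def Sl_def fscale_def)
  qed
qed

lemma dim_W_eq:
  assumes tr: "t \<le> r"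
  shows "fvs.dim (Phi n r t mu ` Kt n t) = fvs.dim (Kt n t)"
proof -
  let ?W = "Phi n r t mu ` Kt n t"
  have KS: "Kt n t \<subseteq> fvs.span (dlt ` sphere_layer n t)"
    using Kt_funs funs_on_span[OF finite_layer] by blast
  have WS: "?W \<subseteq> fvs.span (dlt ` hball n r)"
    using Phi_funs funs_on_span[OF finite_hball] by blast
  have le1: "fvs.dim ?W \<le> fvs.dim (Kt n t)"
    by (rule dim_image_le'[OF Phi_lin KS]) (simp add: finite_layer)
  have e: "restr (sphere_layer n t) ` ?W = Kt n t"
    using restr_Phi[OF tr] by (auto simp: image_image)
  have "fvs.dim (restr (sphere_layer n t) ` ?W) \<le> fvs.dim ?W"
    by (rule dim_image_le'[OF restr_lin WS]) (simp add: finite_hball)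
  hence "fvs.dim (Kt n t) \<le> fvs.dim ?W" unfolding e .
  thus ?thesis using le1 by simp
qed

lemma dim_zero_sub:
  assumes "fvs.dim V = 0" "V \<subseteq> fvs.span S" "finite S"
  shows "V \<subseteq> {0}"
proof -
  obtain B where B: "B \<subseteq> V" "fvs.independent B" "V \<subseteq> fvs.span B" "card B = fvs.dim V" "finite B"
    using fvs_basis[OF assms(2,3)] by blast
  hence "B = {}" using assms(1) by simp
  thus ?thesis using B(3) by simp
qed


theorem theorem1p7:
  fixes n r :: nat
  assumes "2 * r \<le> n"
  shows "\<exists>W :: nat \<Rightarrow> real \<Rightarrow> (nat set \<Rightarrow> real) set.
    \<comment> \<open>(1)\<close>
    (\<forall>t \<in> {0..r}. card (Lambda n r t) = r - t + 1 \<and>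
       (\<forall>mu \<in> Lambda n r t.
          fvs.subspace (W t mu) \<and> W t mu \<subseteq> adj_eigenspace n r mu \<and>
          int (fvs.dim (W t mu)) = bdiff n t)) \<and>
    \<comment> \<open>(2)\<close>
    (\<forall>mu::real. is_adj_eigenvalue n r mu \<longleftrightarrow> (\<exists>t \<in> {0..r}. mu \<in> Lambda n r t)) \<and>
    (\<forall>mu::real. is_adj_eigenvalue n r mu \<longrightarrow>
       int (fvs.dim (adj_eigenspace n r mu)) = (\<Sum>t \<in> {t \<in> {0..r}. mu \<in> Lambda n r t}. bdiff n t)) \<and>
    \<comment> \<open>(3)\<close>
    (\<forall>t \<in> {0..r}. \<forall>mu \<in> Lambda n r t.
       (\<forall>f \<in> W t mu.
          (\<forall>x. x \<subseteq> {1..n} \<and> card x < t \<longrightarrow> f x = 0) \<and>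
          (\<forall>i. t \<le> i \<and> i \<le> r \<longrightarrow> restr (sphere_layer n i) f \<in> V_sp n i t)) \<and>
       fvs.span (restr (sphere_layer n t) ` W t mu) = V_sp n t t \<and>
       inj_on (restr (sphere_layer n t)) (W t mu))"
proof -
  note rn = assms
  define W where "W t mu = Phi n r t mu ` Kt n t" for t mu
  let ?S = "dlt ` hball n r"
  have fS: "finite ?S" using finite_hball by simp
  have FS: "funs_on (hball n r) \<subseteq> fvs.span ?S" by (rule funs_on_span[OF finite_hball])
  have W_sub: "fvs.subspace (W t mu)" for t mu
    unfolding W_def by (rule image_subspace[OF Phi_lin Kt_subspace])
  have W_funs: "W t mu \<subseteq> funs_on (hball n r)" for t mu
    unfolding W_def using Phi_funs by blast
  have W_eig: "W t mu \<subseteq> adj_eigenspace n r mu" if "t \<in> {0..r}" "mu \<in> Lambda n r t" for t mu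
  proof
    fix f assume "f \<in> W t mu"
    then obtain h where h: "h \<in> Kt n t" "f = Phi n r t mu h" unfolding W_def by blast
    have tr: "t \<le> r" using that by simp
    have root: "poly (Qp (real n - 2*real t) (Suc (r - t))) mu = 0"
      using that Lambda_char[OF rn tr] by simp
    show "f \<in> adj_eigenspace n r mu"
      unfolding adj_eigenspace_def using h Phi_eigen[OF rn tr root h(1)] Phi_funs by simp
  qed
  have W_dim: "fvs.dim (W t mu) = fvs.dim (Kt n t)" if "t \<le> r" for t mu
    unfolding W_def by (rule dim_W_eq[OF that])
  have cardL: "card (Lambda n r t) = r - t + 1" if "t \<in> {0..r}" for t
    using card_Lambda[OF rn] that by simp
  have finL: "finite (Lambda n r t)" if "t \<in> {0..r}" for t
    using cardL[OF that] by (metis add_is_0 card.infinite one_neq_zero)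
  have W_orth: "binner n r x y = 0"
    if pre: "(t, mu) \<noteq> (t', mu')" "t \<in> {0..r}" "mu \<in> Lambda n r t" "t' \<in> {0..r}" "mu' \<in> Lambda n r t'"
       "x \<in> W t mu" "y \<in> W t' mu'" for t mu t' mu' x y
  proof (cases "t = t'")
    case False
    obtain h h' where "h \<in> Kt n t" "x = Phi n r t mu h" "h' \<in> Kt n t'" "y = Phi n r t' mu' h'"
      using pre(6,7) unfolding W_def by blast
    thus ?thesis using Phi_orth[OF False] by simp
  next
    case True
    hence "mu \<noteq> mu'" using pre(1) by simp
    moreover have "x \<in> adj_eigenspace n r mu" using W_eig[OF pre(2,3)] pre(6) by blast
    moreover have "y \<in> adj_eigenspace n r mu'" using W_eig[OF pre(4,5)] pre(7) by blast
    ultimately show ?thesis using eigen_orth by blast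
  qed
  have cardB: "int (card (hball n r)) = (\<Sum>t\<in>{0..r}. int (r - t + 1) * bdiff n t)"
  proof -
    have "int (card (hball n r)) = (\<Sum>i\<in>{0..r}. int (n choose i))" by (simp add: card_hball)
    also have "\<dots> = (\<Sum>t\<in>{0..r}. int (r - t + 1) * bdiff n t)" by (rule tele2[symmetric])
    finally show ?thesis .
  qed
  define I where "I = Sigma {0..r} (Lambda n r)"
  have finI: "finite I" unfolding I_def using finL by auto
  have dimspan_le: "fvs.dim (fvs.span X) \<le> card (hball n r)" if "X \<subseteq> funs_on (hball n r)" for X
  proof -
    have "fvs.span X \<subseteq> funs_on (hball n r)"
      by (rule fvs.span_minimal[OF that funs_on_subspace])
    hence "fvs.dim (fvs.span X) \<le> fvs.dim (funs_on (hball n r))"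
      by (rule dim_mono'[OF _ FS fS])
    also have "\<dots> \<le> card (hball n r)" by (rule dim_funs_on_le[OF finite_hball])
    finally show ?thesis .
  qed
  have sumI: "(\<Sum>p\<in>I. g (fst p)) = (\<Sum>t\<in>{0..r}. int (r - t + 1) * g t)" for g :: "nat \<Rightarrow> int"
  proof -
    have "(\<Sum>t\<in>{0..r}. \<Sum>mu\<in>Lambda n r t. g t) = (\<Sum>(t,mu)\<in>I. g t)"
      unfolding I_def by (rule sum.Sigma) (use finL in auto)
    hence "(\<Sum>p\<in>I. g (fst p)) = (\<Sum>t\<in>{0..r}. \<Sum>mu\<in>Lambda n r t. g t)"
      by (simp add: case_prod_beta)
    also have "\<dots> = (\<Sum>t\<in>{0..r}. int (r - t + 1) * g t)"
      by (rule sum.cong) (simp_all add: cardL)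
    finally show ?thesis .
  qed
  have glob: "(\<Sum>p\<in>I. fvs.dim (W (fst p) (snd p))) \<le> card (hball n r)"
  proof -
    have "(\<Sum>p\<in>I. fvs.dim (W (fst p) (snd p))) \<le> fvs.dim (fvs.span (\<Union>p\<in>I. W (fst p) (snd p)))"
    proof (rule orth_family[OF finI])
      fix p assume "p \<in> I"
      show "W (fst p) (snd p) \<subseteq> funs_on (hball n r) \<and> fvs.subspace (W (fst p) (snd p))"
        using W_funs W_sub by blast
    next
      fix p q x y assume "p \<in> I" "q \<in> I" "p \<noteq> q" "x \<in> W (fst p) (snd p)" "y \<in> W (fst q) (snd q)"
      thus "binner n r x y = 0"
        using W_orth[of "fst p" "snd p" "fst q" "snd q" x y] unfolding I_def by (auto simp: prod_eq_iff)
    qed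
    also have "\<dots> \<le> card (hball n r)" by (rule dimspan_le) (use W_funs in blast)
    finally show ?thesis .
  qed
  have Kdim: "int (fvs.dim (Kt n t)) = bdiff n t" if "t \<in> {0..r}" for t
  proof (rule ccontr)
    assume ne: "int (fvs.dim (Kt n t)) \<noteq> bdiff n t"
    have "(\<Sum>t\<in>{0..r}. int (r - t + 1) * bdiff n t) < (\<Sum>t\<in>{0..r}. int (r - t + 1) * int (fvs.dim (Kt n t)))"
    proof (rule sum_strict_mono_ex1)
      show "finite {0..r}" by simp
      show "\<forall>x\<in>{0..r}. int (r - x + 1) * bdiff n x \<le> int (r - x + 1) * int (fvs.dim (Kt n x))"
        using dim_Kt_ge by (auto intro: mult_left_mono)
      have "bdiff n t < int (fvs.dim (Kt n t))" using ne dim_Kt_ge[of n t] by simp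
      thus "\<exists>a\<in>{0..r}. int (r - a + 1) * bdiff n a < int (r - a + 1) * int (fvs.dim (Kt n a))"
        using that by (intro bexI[of _ t]) simp_all
    qed
    also have "\<dots> = (\<Sum>p\<in>I. int (fvs.dim (Kt n (fst p))))" by (rule sumI[symmetric])
    also have "\<dots> = (\<Sum>p\<in>I. int (fvs.dim (W (fst p) (snd p))))"
      by (rule sum.cong) (auto simp: I_def W_dim)
    also have "\<dots> \<le> int (card (hball n r))"
    proof -
      have "int (\<Sum>p\<in>I. fvs.dim (W (fst p) (snd p))) \<le> int (card (hball n r))" using glob by (simp only: of_nat_le_iff)
      thus ?thesis by simp
    qed
    also have "\<dots> = (\<Sum>t\<in>{0..r}. int (r - t + 1) * bdiff n t)" by (rule cardB)
    finally show False by simp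
  qed
  have Wdim: "int (fvs.dim (W t mu)) = bdiff n t" if "t \<in> {0..r}" for t mu
    using W_dim[of t mu] Kdim[OF that] that by simp
  have Edim: "int (fvs.dim (adj_eigenspace n r mu)) = (\<Sum>t \<in> {t \<in> {0..r}. mu \<in> Lambda n r t}. bdiff n t)" for mu
  proof -
    let ?E = "adj_eigenspace n r mu"
    let ?T = "{t \<in> {0..r}. mu \<in> Lambda n r t}"
    have E_funs: "?E \<subseteq> funs_on (hball n r)" by (auto simp: adj_eigenspace_def)
    have finT: "finite ?T" by simp
    have "(\<Sum>t\<in>?T. fvs.dim (W t mu)) \<le> fvs.dim (fvs.span (\<Union>t\<in>?T. W t mu))"
    proof (rule orth_family[OF finT])
      fix t assume "t \<in> ?T"
      show "W t mu \<subseteq> funs_on (hball n r) \<and> fvs.subspace (W t mu)" using W_funs W_sub by blast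
    next
      fix t t' x y assume "t \<in> ?T" "t' \<in> ?T" "t \<noteq> t'" "x \<in> W t mu" "y \<in> W t' mu"
      thus "binner n r x y = 0" using W_orth[of t mu t' mu x y] by auto
    qed
    also have "\<dots> \<le> fvs.dim ?E"
    proof (rule dim_mono'[OF _ _ fS])
      show "fvs.span (\<Union>t\<in>?T. W t mu) \<subseteq> ?E"
        by (rule fvs.span_minimal[OF _ eigenspace_subspace]) (use W_eig in auto)
      show "?E \<subseteq> fvs.span ?S" using E_funs FS by blast
    qed
    finally have lo: "(\<Sum>t\<in>?T. fvs.dim (W t mu)) \<le> fvs.dim ?E" .
    have lo': "(\<Sum>t\<in>?T. bdiff n t) \<le> int (fvs.dim ?E)"
    proof -
      have "(\<Sum>t\<in>?T. bdiff n t) = (\<Sum>t\<in>?T. int (fvs.dim (W t mu)))"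
        by (rule sum.cong) (auto simp: Wdim)
      moreover have "int (\<Sum>t\<in>?T. fvs.dim (W t mu)) \<le> int (fvs.dim ?E)" using lo by (simp only: of_nat_le_iff)
      ultimately show ?thesis by simp
    qed
    define I' where "I' = {p \<in> I. snd p \<noteq> mu}"
    have finI': "finite I'" using finI unfolding I'_def by simp
    let ?Y = "fvs.span (\<Union>p\<in>I'. W (fst p) (snd p))"
    have Y: "(\<Sum>p\<in>I'. fvs.dim (W (fst p) (snd p))) \<le> fvs.dim ?Y"
    proof (rule orth_family[OF finI'])
      fix p assume "p \<in> I'"
      show "W (fst p) (snd p) \<subseteq> funs_on (hball n r) \<and> fvs.subspace (W (fst p) (snd p))"
        using W_funs W_sub by blast
    next
      fix p q x y assume "p \<in> I'" "q \<in> I'" "p \<noteq> q" "x \<in> W (fst p) (snd p)" "y \<in> W (fst q) (snd q)"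
      thus "binner n r x y = 0"
        using W_orth[of "fst p" "snd p" "fst q" "snd q" x y] unfolding I'_def I_def by (auto simp: prod_eq_iff)
    qed
    have Yfuns: "?Y \<subseteq> funs_on (hball n r)"
      by (rule fvs.span_minimal[OF _ funs_on_subspace]) (use W_funs in blast)
    have EY: "fvs.dim ?E + fvs.dim ?Y \<le> fvs.dim (fvs.span (?E \<union> ?Y))"
    proof (rule orth_pair[OF E_funs eigenspace_subspace Yfuns fvs.subspace_span])
      fix x y assume x: "x \<in> ?E" and y: "y \<in> ?Y"
      show "binner n r x y = 0"
      proof (rule orth_span[OF _ y])
        fix z assume "z \<in> (\<Union>p\<in>I'. W (fst p) (snd p))"
        then obtain p where p: "p \<in> I'" "z \<in> W (fst p) (snd p)" by blast
        have "z \<in> adj_eigenspace n r (snd p)" using W_eig[of "fst p" "snd p"] p unfolding I'_def I_def by auto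
        moreover have "mu \<noteq> snd p" using p unfolding I'_def by auto
        ultimately show "binner n r x z = 0" using eigen_orth x by blast
      qed
    qed
    have EY2: "fvs.dim (fvs.span (?E \<union> ?Y)) \<le> card (hball n r)"
      by (rule dimspan_le) (use E_funs Yfuns in blast)
    have splitI: "I = I' \<union> (\<lambda>t. (t, mu)) ` ?T" unfolding I'_def I_def by auto
    have disjI: "I' \<inter> (\<lambda>t. (t, mu)) ` ?T = {}" unfolding I'_def by auto
    have injT: "inj_on (\<lambda>t. (t, mu)) ?T" by (auto simp: inj_on_def)
    have "int (card (hball n r)) = (\<Sum>t\<in>{0..r}. int (r - t + 1) * bdiff n t)" by (rule cardB)
    also have "\<dots> = (\<Sum>p\<in>I. bdiff n (fst p))" by (rule sumI[symmetric])
    also have "\<dots> = (\<Sum>p\<in>I'. bdiff n (fst p)) + (\<Sum>p\<in>(\<lambda>t. (t, mu)) ` ?T. bdiff n (fst p))"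
      unfolding splitI by (rule sum.union_disjoint) (use finI' disjI in auto)
    also have "(\<Sum>p\<in>(\<lambda>t. (t, mu)) ` ?T. bdiff n (fst p)) = (\<Sum>t\<in>?T. bdiff n t)"
      unfolding sum.reindex[OF injT] by (simp add: comp_def)
    also have "(\<Sum>p\<in>I'. bdiff n (fst p)) = (\<Sum>p\<in>I'. int (fvs.dim (W (fst p) (snd p))))"
      by (rule sum.cong) (auto simp: I'_def I_def Wdim)
    finally have cnt: "int (card (hball n r)) = (\<Sum>p\<in>I'. int (fvs.dim (W (fst p) (snd p)))) + (\<Sum>t\<in>?T. bdiff n t)" .
    have "int (fvs.dim ?E) + (\<Sum>p\<in>I'. int (fvs.dim (W (fst p) (snd p)))) \<le> int (card (hball n r))"
    proof -
      have "fvs.dim ?E + (\<Sum>p\<in>I'. fvs.dim (W (fst p) (snd p))) \<le> card (hball n r)" using Y EY EY2 by linarith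
      hence "int (fvs.dim ?E + (\<Sum>p\<in>I'. fvs.dim (W (fst p) (snd p)))) \<le> int (card (hball n r))" by (simp only: of_nat_le_iff)
      thus ?thesis by simp
    qed
    hence "int (fvs.dim ?E) \<le> (\<Sum>t\<in>?T. bdiff n t)" using cnt by simp
    thus ?thesis using lo' by simp
  qed
  have eig_iff: "is_adj_eigenvalue n r mu \<longleftrightarrow> (\<exists>t \<in> {0..r}. mu \<in> Lambda n r t)" for mu
  proof
    assume ev: "is_adj_eigenvalue n r mu"
    show "\<exists>t \<in> {0..r}. mu \<in> Lambda n r t"
    proof (rule ccontr)
      assume "\<not> ?thesis"
      hence e: "{t \<in> {0..r}. mu \<in> Lambda n r t} = {}" by auto
      have "int (fvs.dim (adj_eigenspace n r mu)) = 0" using Edim[of mu] unfolding e by simp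
      hence "fvs.dim (adj_eigenspace n r mu) = 0" by simp
      hence "adj_eigenspace n r mu \<subseteq> {0}"
        by (rule dim_zero_sub[OF _ _ fS]) (use FS in \<open>auto simp: adj_eigenspace_def\<close>)
      thus False using ev unfolding is_adj_eigenvalue_def by auto
    qed
  next
    assume "\<exists>t \<in> {0..r}. mu \<in> Lambda n r t"
    then obtain t where t: "t \<in> {0..r}" "mu \<in> Lambda n r t" by blast
    have "bdiff n t > 0" using t rn by (intro bdiff_pos) simp
    hence "fvs.dim (W t mu) \<noteq> 0" using Wdim[OF t(1), of mu] by simp
    hence "\<not> W t mu \<subseteq> {0}"
      using fvs.dim_le_card[of "W t mu" "{}"] by auto
    then obtain f where "f \<in> W t mu" "f \<noteq> 0" by blast
    thus "is_adj_eigenvalue n r mu" using W_eig[OF t] unfolding is_adj_eigenvalue_def by blast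
  qed
  have P3: "(\<forall>f \<in> W t mu.
          (\<forall>x. x \<subseteq> {1..n} \<and> card x < t \<longrightarrow> f x = 0) \<and>
          (\<forall>i. t \<le> i \<and> i \<le> r \<longrightarrow> restr (sphere_layer n i) f \<in> V_sp n i t)) \<and>
       fvs.span (restr (sphere_layer n t) ` W t mu) = V_sp n t t \<and>
       inj_on (restr (sphere_layer n t)) (W t mu)" if t: "t \<in> {0..r}" for t mu
  proof (intro conjI ballI allI impI)
    have tr: "t \<le> r" using t by simp
    fix f assume "f \<in> W t mu"
    then obtain h where h: "h \<in> Kt n t" "f = Phi n r t mu h" unfolding W_def by blast
    {
      fix x assume x: "x \<subseteq> {1..n} \<and> card x < t"
      have "Ssum t h x = 0" using Ssum_small[OF finite_sub_n] x by blast
      thus "f x = 0" unfolding h(2) Phi_def by simp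
    }
    {
      fix i assume i: "t \<le> i \<and> i \<le> r"
      show "restr (sphere_layer n i) f \<in> V_sp n i t"
        unfolding h(2) restr_layer_Phi[OF i[THEN conjunct1] i[THEN conjunct2]]
        by (rule V_sp_scale[OF Sl_V[OF h(1)]])
    }
  next
    have tr: "t \<le> r" using t by simp
    have e: "restr (sphere_layer n t) ` W t mu = Kt n t"
      unfolding W_def using restr_Phi[OF tr] by (auto simp: image_image)
    show "fvs.span (restr (sphere_layer n t) ` W t mu) = V_sp n t t"
      unfolding e using Kt_subspace Kt_V by (simp add: fvs.span_eq_iff)
    show "inj_on (restr (sphere_layer n t)) (W t mu)"
    proof (rule inj_onI)
      fix f g assume f: "f \<in> W t mu" and g: "g \<in> W t mu"
        and eq: "restr (sphere_layer n t) f = restr (sphere_layer n t) g"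
      obtain h where h: "h \<in> Kt n t" "f = Phi n r t mu h" using f unfolding W_def by blast
      obtain h' where h': "h' \<in> Kt n t" "g = Phi n r t mu h'" using g unfolding W_def by blast
      have "h = h'" using eq restr_Phi[OF tr h(1)] restr_Phi[OF tr h'(1)] h h' by simp
      thus "f = g" using h h' by simp
    qed
  qed
  have C1: "\<forall>t \<in> {0..r}. card (Lambda n r t) = r - t + 1 \<and>
       (\<forall>mu \<in> Lambda n r t.
          fvs.subspace (W t mu) \<and> W t mu \<subseteq> adj_eigenspace n r mu \<and>
          int (fvs.dim (W t mu)) = bdiff n t)"
    using cardL W_sub W_eig Wdim by blast
  have C2: "\<forall>mu::real. is_adj_eigenvalue n r mu \<longleftrightarrow> (\<exists>t \<in> {0..r}. mu \<in> Lambda n r t)"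
    using eig_iff by blast
  have C3: "\<forall>mu::real. is_adj_eigenvalue n r mu \<longrightarrow>
       int (fvs.dim (adj_eigenspace n r mu)) = (\<Sum>t \<in> {t \<in> {0..r}. mu \<in> Lambda n r t}. bdiff n t)"
    using Edim by blast
  have C4: "\<forall>t \<in> {0..r}. \<forall>mu \<in> Lambda n r t.
       (\<forall>f \<in> W t mu.
          (\<forall>x. x \<subseteq> {1..n} \<and> card x < t \<longrightarrow> f x = 0) \<and>
          (\<forall>i. t \<le> i \<and> i \<le> r \<longrightarrow> restr (sphere_layer n i) f \<in> V_sp n i t)) \<and>
       fvs.span (restr (sphere_layer n t) ` W t mu) = V_sp n t t \<and>
       inj_on (restr (sphere_layer n t)) (W t mu)"
    using P3 by blast
  show ?thesis by (rule exI[of _ W]) (intro conjI C1 C2 C3 C4)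
qed


end
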